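(* Let $\sigma^2>0$, $a>1$, let $Z_i$ be i.i.d. $\mathcal{N}(0,\sigma^2)$, $U_0=0$, $U_i=aU_{i-1}+Z_i$, and $\hat a_{\mathrm{ML}}(u_1^n)=\frac{\sum_{i=1}^{n-1}u_iu_{i+1}}{\sum_{i=1}^{n-1}u_i^2}$. Define $P^+(n,a,\eta)=-\frac1n\log\mathbb{P}[\hat a_{\mathrm{ML}}(U_1^n)-a>\eta]$, $P^-(n,a,\eta)=-\frac1n\log\mathbb{P}[\hat a_{\mathrm{ML}}(U_1^n)-a<-\eta]$, $P(n,a,\eta)=-\frac1n\log\mathbb{P}[|\hat a_{\mathrm{ML}}(U_1^n)-a|>\eta]$. Then for every constant $\eta>0$, $$\liminf_{n\to\infty}P^+(n,a,\eta)\ge\log(a+2\eta),\quad \liminf_{n\to\infty}P^-(n,a,\eta)\ge I^-(a,\eta),\quad \liminf_{n\to\infty}P(n,a,\eta)\ge I^-(a,\eta),$$ where, with $\eta_1=\frac{a^2-1}{a}$ and $\eta_2=\frac{3a+\sqrt{a^2+8}}{4}$, $$I^-(a,\eta)=\begin{cases}\log a,&0<\eta\le\eta_1,\\ \frac12\log\frac{2a\eta-(a^2-1)}{1-(\eta-a)^2},&\eta_1<\eta<\eta_2,\\ \log(2\eta-a),&\eta\ge\eta_2.\end{cases}$$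
   Context: Logarithms are natural. *)

theory Defs
  imports "HOL-Probability.Probability"
begin

fun AR_U :: "real \<Rightarrow> (nat \<Rightarrow> 'a \<Rightarrow> real) \<Rightarrow> nat \<Rightarrow> 'a \<Rightarrow> real" where
  "AR_U a Z 0 \<omega> = 0"
| "AR_U a Z (Suc i) \<omega> = a * AR_U a Z i \<omega> + Z (Suc i) \<omega>"

definition a_ML :: "(nat \<Rightarrow> real) \<Rightarrow> nat \<Rightarrow> real" where
  "a_ML u n = (\<Sum>i=1..n-1. u i * u (i+1)) / (\<Sum>i=1..n-1. (u i)^2)"

definition I_minus :: "real \<Rightarrow> real \<Rightarrow> real" where
  "I_minus a \<eta> =
    (let \<eta>1 = (a^2 - 1) / a; \<eta>2 = (3*a + sqrt (a^2 + 8)) / 4 in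
     if \<eta> \<le> \<eta>1 then ln a
     else if \<eta> < \<eta>2 then (1/2) * ln ((2*a*\<eta> - (a^2 - 1)) / (1 - (\<eta> - a)^2))
     else ln (2*\<eta> - a))"

end

theory Submission
  imports Defs
begin


lemma nd_int1: "\<tau> > 0 \<Longrightarrow> (\<integral>\<^sup>+x. ennreal (normal_density \<mu> \<tau> x) \<partial>lborel) = 1"
proof -
  assume "\<tau> > 0"
  interpret prob_space "density lborel (normal_density \<mu> \<tau>)" using \<open>\<tau> > 0\<close> by (rule prob_space_normal_density)
  have "emeasure (density lborel (normal_density \<mu> \<tau>)) UNIV = 1"
    using emeasure_space_1 by simp
  then show ?thesis by (simp add: emeasure_density)
qed

lemma nd_pointwise:
  fixes \<sigma> \<alpha> \<beta> y :: real
  assumes s: "\<sigma> > 0" and d: "1 - 2*\<alpha>*\<sigma>^2 > 0"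
  shows "normal_density 0 \<sigma> y * exp (\<alpha>*y^2 + \<beta>*y) =
    ((1 - 2*\<alpha>*\<sigma>^2) powr (-1/2) * exp (\<beta>^2*\<sigma>^2/(2*(1 - 2*\<alpha>*\<sigma>^2)))) *
    normal_density (\<beta>*\<sigma>^2/(1 - 2*\<alpha>*\<sigma>^2)) (\<sigma> / sqrt (1 - 2*\<alpha>*\<sigma>^2)) y"
proof -
  define d where "d = 1 - 2*\<alpha>*\<sigma>^2"
  have dp: "d > 0" using d d_def by simp
  have sq: "sqrt (2*pi*(\<sigma> / sqrt d)^2) = sqrt (2*pi*\<sigma>^2) / sqrt d"
    using dp s by (simp add: power_divide real_sqrt_divide)
  have pw: "d powr (-1/2) = 1 / sqrt d"
    using dp by (simp add: powr_minus_divide powr_half_sqrt)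
  have t2: "(\<sigma> / sqrt d)^2 = \<sigma>^2 / d" using dp by (simp add: power_divide)
  have e1: "(-((y - \<beta>*\<sigma>^2/d)^2))/(2*(\<sigma>^2 / d)) = -(d*y^2/(2*\<sigma>^2)) + \<beta>*y - \<beta>^2*\<sigma>^2/(2*d)"
    using dp s by (simp add: field_simps power2_eq_square)
  have e2: "d*y^2/(2*\<sigma>^2) = y^2/(2*\<sigma>^2) - \<alpha>*y^2"
    using s unfolding d_def by (simp add: field_simps)
  have ex: "(-((y - 0)^2))/(2*\<sigma>^2) + (\<alpha>*y^2 + \<beta>*y) =
      \<beta>^2*\<sigma>^2/(2*d) + ((-((y - \<beta>*\<sigma>^2/d)^2))/(2*(\<sigma> / sqrt d)^2))"
    unfolding t2 e1 e2 by simp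
  have "normal_density 0 \<sigma> y * exp (\<alpha>*y^2 + \<beta>*y) =
      1 / sqrt (2*pi*\<sigma>^2) * exp ((-((y - 0)^2))/(2*\<sigma>^2) + (\<alpha>*y^2 + \<beta>*y))"
    by (simp only: normal_density_def exp_add)
  also have "\<dots> = 1 / sqrt (2*pi*\<sigma>^2) * exp (\<beta>^2*\<sigma>^2/(2*d)) * exp ((-((y - \<beta>*\<sigma>^2/d)^2))/(2*(\<sigma> / sqrt d)^2))"
    by (simp only: ex exp_add mult.assoc)
  also have "\<dots> = (d powr (-1/2) * exp (\<beta>^2*\<sigma>^2/(2*d))) * normal_density (\<beta>*\<sigma>^2/d) (\<sigma> / sqrt d) y"
    unfolding normal_density_def sq pw using dp by simp
  finally show ?thesis unfolding d_def .
qed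

lemma gauss_mgf:
  fixes \<sigma> \<alpha> \<beta> :: real
  assumes s: "\<sigma> > 0" and d: "1 - 2*\<alpha>*\<sigma>^2 > 0"
  shows "(\<integral>\<^sup>+y. ennreal (exp (\<alpha>*y^2 + \<beta>*y)) \<partial>density lborel (normal_density 0 \<sigma>)) =
    ennreal ((1 - 2*\<alpha>*\<sigma>^2) powr (-1/2) * exp (\<beta>^2*\<sigma>^2/(2*(1 - 2*\<alpha>*\<sigma>^2))))"
proof -
  let ?C = "(1 - 2*\<alpha>*\<sigma>^2) powr (-1/2) * exp (\<beta>^2*\<sigma>^2/(2*(1 - 2*\<alpha>*\<sigma>^2)))"
  let ?nd = "normal_density (\<beta>*\<sigma>^2/(1 - 2*\<alpha>*\<sigma>^2)) (\<sigma> / sqrt (1 - 2*\<alpha>*\<sigma>^2))"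
  have C0: "?C \<ge> 0" by simp
  have "(\<integral>\<^sup>+y. ennreal (exp (\<alpha>*y^2 + \<beta>*y)) \<partial>density lborel (normal_density 0 \<sigma>)) =
     (\<integral>\<^sup>+y. ennreal (normal_density 0 \<sigma> y) * ennreal (exp (\<alpha>*y^2 + \<beta>*y)) \<partial>lborel)"
    by (subst nn_integral_density) auto
  also have "\<dots> = (\<integral>\<^sup>+y. ennreal ?C * ennreal (?nd y) \<partial>lborel)"
    by (intro nn_integral_cong) (simp add: ennreal_mult'[symmetric] nd_pointwise[OF s d])
  also have "\<dots> = ennreal ?C * (\<integral>\<^sup>+y. ennreal (?nd y) \<partial>lborel)"
    by (subst nn_integral_cmult) auto
  also have "\<dots> = ennreal ?C" using s d by (simp add: nd_int1)
  finally show ?thesis .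
qed



fun uu :: "real \<Rightarrow> (nat \<Rightarrow> real) \<Rightarrow> nat \<Rightarrow> real" where
  "uu a x 0 = 0"
| "uu a x (Suc i) = a * uu a x i + x (Suc i)"

definition VV :: "real \<Rightarrow> real \<Rightarrow> real \<Rightarrow> (nat \<Rightarrow> real) \<Rightarrow> nat \<Rightarrow> real" where
  "VV a s r x m = (\<Sum>i<m. s * uu a x i * x (Suc i) - r * (uu a x i)^2)"

definition NN :: "real \<Rightarrow> real measure" where
  "NN \<sigma> = density lborel (normal_density 0 \<sigma>)"

definition JJ :: "real \<Rightarrow> real \<Rightarrow> real \<Rightarrow> real \<Rightarrow> nat \<Rightarrow> real \<Rightarrow> ennreal" where
  "JJ a \<sigma> s r m c = (\<integral>\<^sup>+x. ennreal (exp (VV a s r x m + c * (uu a x m)^2)) \<partial>PiM {1..m} (\<lambda>_. NN \<sigma>))"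

definition ff :: "real \<Rightarrow> real \<Rightarrow> real \<Rightarrow> real \<Rightarrow> real \<Rightarrow> real" where
  "ff a \<sigma> s r c = c*a^2 - r + (2*c*a+s)^2*\<sigma>^2/(2*(1 - 2*c*\<sigma>^2))"

lemma sets_NN[simp, measurable_cong]: "sets (NN \<sigma>) = sets borel"
  by (simp add: NN_def)

lemma space_NN[simp]: "space (NN \<sigma>) = UNIV"
  by (simp add: NN_def)

lemma prob_NN: "\<sigma> > 0 \<Longrightarrow> prob_space (NN \<sigma>)"
  unfolding NN_def by (rule prob_space_normal_density)

lemma pps_NN: "\<sigma> > 0 \<Longrightarrow> product_prob_space (\<lambda>_::nat. NN \<sigma>)"
  by (intro product_prob_spaceI prob_NN)

lemma comp_meas: "j \<in> I \<Longrightarrow> (\<lambda>x. x j) \<in> borel_measurable (PiM I (\<lambda>_. NN \<sigma>))"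
proof -
  assume "j \<in> I"
  then have "(\<lambda>x. x j) \<in> measurable (PiM I (\<lambda>_. NN \<sigma>)) (NN \<sigma>)"
    by (rule measurable_component_singleton)
  moreover have "measurable (PiM I (\<lambda>_. NN \<sigma>)) (NN \<sigma>) = borel_measurable (PiM I (\<lambda>_. NN \<sigma>))"
    by (rule measurable_cong_sets[OF refl sets_NN])
  ultimately show ?thesis by (simp only:)
qed

lemma uu_meas: "{1..i} \<subseteq> I \<Longrightarrow> (\<lambda>x. uu a x i) \<in> borel_measurable (PiM I (\<lambda>_. NN \<sigma>))"
proof (induction i)
  case 0 then show ?case by simp
next
  case (Suc i)
  then have "{1..i} \<subseteq> I" "Suc i \<in> I" by auto
  have "(\<lambda>x. a * uu a x i + x (Suc i)) \<in> borel_measurable (PiM I (\<lambda>_. NN \<sigma>))"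
    by (rule borel_measurable_add[OF borel_measurable_times[OF borel_measurable_const Suc.IH[OF \<open>{1..i} \<subseteq> I\<close>]] comp_meas[OF \<open>Suc i \<in> I\<close>, of \<sigma>]])
  then show ?case by (simp only: uu.simps)
qed

lemma VV_meas: "{1..m} \<subseteq> I \<Longrightarrow> (\<lambda>x. VV a s r x m) \<in> borel_measurable (PiM I (\<lambda>_. NN \<sigma>))"
  unfolding VV_def
proof (intro borel_measurable_sum)
  fix i assume "{1..m} \<subseteq> I" "i \<in> {..<m}"
  then have "{1..i} \<subseteq> I" "Suc i \<in> I" by auto
  then show "(\<lambda>x. s * uu a x i * x (Suc i) - r * (uu a x i)^2) \<in> borel_measurable (PiM I (\<lambda>_. NN \<sigma>))"
  proof -
    note [measurable] = uu_meas[OF \<open>{1..i} \<subseteq> I\<close>, of a \<sigma>] comp_meas[OF \<open>Suc i \<in> I\<close>, of \<sigma>]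
    show ?thesis by measurable
  qed
qed

lemma uu_upd: "i \<le> m \<Longrightarrow> uu a (x(Suc m := y)) i = uu a x i"
  by (induction i) auto

lemma uu_cong: "(\<And>j. j \<in> {1..i} \<Longrightarrow> x j = x' j) \<Longrightarrow> uu a x i = uu a x' i"
  by (induction i) auto

lemma VV_cong: "(\<And>j. j \<in> {1..m} \<Longrightarrow> x j = x' j) \<Longrightarrow> VV a s r x m = VV a s r x' m"
  unfolding VV_def
proof (intro sum.cong refl)
  fix i assume h: "\<And>j. j \<in> {1..m} \<Longrightarrow> x j = x' j" and i: "i \<in> {..<m}"
  have "uu a x i = uu a x' i" using h i by (intro uu_cong) auto
  moreover have "x (Suc i) = x' (Suc i)" using h i by auto
  ultimately show "s * uu a x i * x (Suc i) - r * (uu a x i)^2 = s * uu a x' i * x' (Suc i) - r * (uu a x' i)^2"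
    by simp
qed

lemma VV_upd: "VV a s r (x(Suc m := y)) (Suc m) = VV a s r x m + s * uu a x m * y - r * (uu a x m)^2"
proof -
  have "VV a s r (x(Suc m := y)) m = VV a s r x m"
    by (rule VV_cong) auto
  then show ?thesis unfolding VV_def by (simp add: uu_upd)
qed

lemma JJ_0: "\<sigma> > 0 \<Longrightarrow> JJ a \<sigma> s r 0 c = 1"
proof -
  assume "\<sigma> > 0"
  interpret product_prob_space "\<lambda>_::nat. NN \<sigma>" using pps_NN[OF \<open>\<sigma> > 0\<close>] .
  show ?thesis unfolding JJ_def by (simp add: nn_integral_empty VV_def PiM_empty)
qed

lemma JJ_mono: "c \<le> c' \<Longrightarrow> JJ a \<sigma> s r m c \<le> JJ a \<sigma> s r m c'"
  unfolding JJ_def by (intro nn_integral_mono) (simp add: mult_right_mono)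



lemma JJ_step:
  assumes s: "\<sigma> > 0" and d: "1 - 2*c*\<sigma>^2 > 0"
  shows "JJ a \<sigma> s r (Suc m) c = ennreal ((1 - 2*c*\<sigma>^2) powr (-1/2)) * JJ a \<sigma> s r m (ff a \<sigma> s r c)"
proof -
  interpret product_prob_space "\<lambda>_::nat. NN \<sigma>" using pps_NN[OF s] .
  let ?d = "1 - 2*c*\<sigma>^2"
  have ins: "{1..Suc m} = insert (Suc m) {1..m}" by auto
  have meas: "(\<lambda>x. ennreal (exp (VV a s r x (Suc m) + c * (uu a x (Suc m))^2))) \<in> borel_measurable (PiM (insert (Suc m) {1..m}) (\<lambda>_. NN \<sigma>))"
  proof -
    have sub: "{1..Suc m} \<subseteq> insert (Suc m) {1..m}" by auto
    note h1 = VV_meas[OF sub, of a s r \<sigma>]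
    note h2 = uu_meas[OF sub, of a \<sigma>]
    show ?thesis
      by (rule measurable_compose[OF measurable_compose[OF borel_measurable_add[OF h1
          borel_measurable_times[OF borel_measurable_const borel_measurable_power[OF h2]]] borel_measurable_exp] measurable_ennreal])
  qed
  have "JJ a \<sigma> s r (Suc m) c = (\<integral>\<^sup>+x. (\<integral>\<^sup>+y. ennreal (exp (VV a s r (x(Suc m := y)) (Suc m) + c * (uu a (x(Suc m := y)) (Suc m))^2)) \<partial>NN \<sigma>) \<partial>PiM {1..m} (\<lambda>_. NN \<sigma>))"
    unfolding JJ_def ins by (rule product_nn_integral_insert[OF _ _ meas]) auto
  also have "\<dots> = (\<integral>\<^sup>+x. ennreal ((1 - 2*c*\<sigma>^2) powr (-1/2)) * ennreal (exp (VV a s r x m + ff a \<sigma> s r c * (uu a x m)^2)) \<partial>PiM {1..m} (\<lambda>_. NN \<sigma>))"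
  proof (intro nn_integral_cong)
    fix x
    let ?u = "uu a x m"
    have "(\<integral>\<^sup>+y. ennreal (exp (VV a s r (x(Suc m := y)) (Suc m) + c * (uu a (x(Suc m := y)) (Suc m))^2)) \<partial>NN \<sigma>)
        = (\<integral>\<^sup>+y. ennreal (exp (VV a s r x m + (c*a^2 - r) * ?u^2)) * ennreal (exp (c*y^2 + ((2*c*a+s)*?u)*y)) \<partial>NN \<sigma>)"
    proof (intro nn_integral_cong)
      fix y
      have e: "VV a s r (x(Suc m := y)) (Suc m) + c * (uu a (x(Suc m := y)) (Suc m))^2
         = (VV a s r x m + (c*a^2 - r) * ?u^2) + (c*y^2 + ((2*c*a+s)*?u)*y)"
        by (simp add: VV_upd uu_upd power2_eq_square algebra_simps)
      show "ennreal (exp (VV a s r (x(Suc m := y)) (Suc m) + c * (uu a (x(Suc m := y)) (Suc m))^2))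
         = ennreal (exp (VV a s r x m + (c*a^2 - r) * ?u^2)) * ennreal (exp (c*y^2 + ((2*c*a+s)*?u)*y))"
        unfolding e exp_add by (simp add: ennreal_mult)
    qed
    also have "\<dots> = ennreal (exp (VV a s r x m + (c*a^2 - r) * ?u^2)) * (\<integral>\<^sup>+y. ennreal (exp (c*y^2 + ((2*c*a+s)*?u)*y)) \<partial>NN \<sigma>)"
      by (rule nn_integral_cmult) (simp add: NN_def)
    also have "\<dots> = ennreal (exp (VV a s r x m + (c*a^2 - r) * ?u^2)) * ennreal (?d powr (-1/2) * exp (((2*c*a+s)*?u)^2*\<sigma>^2/(2*?d)))"
      unfolding NN_def using gauss_mgf[OF s d] by simp
    also have "\<dots> = ennreal (?d powr (-1/2)) * ennreal (exp (VV a s r x m + ff a \<sigma> s r c * ?u^2))"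
    proof -
      have "VV a s r x m + (c*a^2 - r) * ?u^2 + ((2*c*a+s)*?u)^2*\<sigma>^2/(2*?d) = VV a s r x m + ff a \<sigma> s r c * ?u^2"
        unfolding ff_def power_mult_distrib by (simp add: algebra_simps add_divide_distrib diff_divide_distrib)
      then have "exp (VV a s r x m + (c*a^2 - r) * ?u^2) * exp (((2*c*a+s)*?u)^2*\<sigma>^2/(2*?d)) = exp (VV a s r x m + ff a \<sigma> s r c * ?u^2)"
        by (simp add: exp_add[symmetric])
      then show ?thesis
        by (simp add: ennreal_mult'[symmetric] mult.left_commute[of "?d powr (-1/2)"])
    qed
    finally show "(\<integral>\<^sup>+y. ennreal (exp (VV a s r (x(Suc m := y)) (Suc m) + c * (uu a (x(Suc m := y)) (Suc m))^2)) \<partial>NN \<sigma>)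
      = ennreal (?d powr (-1/2)) * ennreal (exp (VV a s r x m + ff a \<sigma> s r c * ?u^2))" .
  qed
  also have "\<dots> = ennreal (?d powr (-1/2)) * JJ a \<sigma> s r m (ff a \<sigma> s r c)"
  proof -
    have sub: "{1..m} \<subseteq> {1..m}" by auto
    note h1 = VV_meas[OF sub, of a s r \<sigma>]
    note h2 = uu_meas[OF sub, of a \<sigma>]
    show ?thesis unfolding JJ_def
      by (rule nn_integral_cmult, rule measurable_compose[OF measurable_compose[OF borel_measurable_add[OF h1
          borel_measurable_times[OF borel_measurable_const borel_measurable_power[OF h2]]] borel_measurable_exp] measurable_ennreal])
  qed
  finally show ?thesis .
qed



lemma JJ_phaseA:
  assumes s: "\<sigma> > 0" and D: "D > 1" and c': "1 - 2*c'*\<sigma>^2 = D" and H: "ff a \<sigma> s r c' \<le> c'"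
  shows "JJ a \<sigma> s r m c' \<le> ennreal (D powr (-(real m)/2))"
proof (induction m)
  case 0 then show ?case using JJ_0[OF s] D by simp
next
  case (Suc m)
  have "JJ a \<sigma> s r (Suc m) c' = ennreal (D powr (-1/2)) * JJ a \<sigma> s r m (ff a \<sigma> s r c')"
    using JJ_step[OF s, of c' a s r m] c' D by simp
  also have "\<dots> \<le> ennreal (D powr (-1/2)) * JJ a \<sigma> s r m c'"
    by (intro mult_left_mono JJ_mono H) simp
  also have "\<dots> \<le> ennreal (D powr (-1/2)) * ennreal (D powr (-(real m)/2))"
    by (intro mult_left_mono Suc.IH) simp
  also have "\<dots> = ennreal (D powr (-(real (Suc m))/2))"
    using D by (simp add: ennreal_mult'[symmetric] powr_add[symmetric] add_divide_distrib[symmetric]) (simp add: field_simps)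
  finally show ?case .
qed

lemma JJ_phaseB:
  assumes s: "\<sigma> > 0" and D: "D > 1" and c': "1 - 2*c'*\<sigma>^2 = D" and dl: "\<delta> > 0"
    and H: "\<And>c. c' \<le> c \<Longrightarrow> c \<le> 0 \<Longrightarrow> ff a \<sigma> s r c \<le> c - \<delta>"
  shows "c' \<le> e \<Longrightarrow> e \<le> 0 \<Longrightarrow> e - real j * \<delta> \<le> c' \<Longrightarrow> JJ a \<sigma> s r (m + j) e \<le> ennreal (D powr (-(real m)/2))"
proof (induction j arbitrary: e)
  case 0
  then have "e = c'" by simp
  have c'0: "c' \<le> 0" using c' D s by (smt (verit) mult_nonneg_nonneg zero_le_power2)
  have "ff a \<sigma> s r c' \<le> c'" using H[of c'] c'0 dl by simp
  then show ?case using JJ_phaseA[OF s D c'] \<open>e = c'\<close> by simp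
next
  case (Suc j)
  define e' where "e' = max c' (e - \<delta>)"
  have d1: "1 - 2*e*\<sigma>^2 \<ge> 1" using Suc.prems s by (simp add: mult_nonpos_nonneg)
  have "JJ a \<sigma> s r (m + Suc j) e = JJ a \<sigma> s r (Suc (m + j)) e" by simp
  also have "\<dots> = ennreal ((1 - 2*e*\<sigma>^2) powr (-1/2)) * JJ a \<sigma> s r (m + j) (ff a \<sigma> s r e)"
    using JJ_step[OF s, of e] d1 by simp
  also have "\<dots> \<le> ennreal 1 * JJ a \<sigma> s r (m + j) e'"
  proof (intro mult_mono JJ_mono ennreal_leI)
    show "(1 - 2*e*\<sigma>^2) powr (-1/2) \<le> 1" using d1 by (simp add: powr_le_one_le ge_one_powr_ge_zero powr_minus_divide)
    show "ff a \<sigma> s r e \<le> e'" using H[of e] Suc.prems unfolding e'_def by simp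
  qed auto
  also have "\<dots> \<le> ennreal (D powr (-(real m)/2))"
  proof -
    have "c' \<le> e'" "e' \<le> 0" "e' - real j * \<delta> \<le> c'"
      using Suc.prems dl unfolding e'_def by (auto simp: algebra_simps)
    then show ?thesis using Suc.IH[of e'] by simp
  qed
  finally show ?case .
qed



definition PP :: "real \<Rightarrow> real \<Rightarrow> real \<Rightarrow> real \<Rightarrow> real" where
  "PP a S R d = d^2 - (a^2 + 1 + 2*a*S + 2*R)*d + (a + S)^2"

lemma ff_poly:
  assumes s: "\<sigma> > 0" and d: "1 - 2*c*\<sigma>^2 > 0"
  shows "ff a \<sigma> s r c - c = PP a (s*\<sigma>^2) (r*\<sigma>^2) (1 - 2*c*\<sigma>^2) / (2*(1 - 2*c*\<sigma>^2)*\<sigma>^2)"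
  using s d unfolding ff_def PP_def
  by (simp add: field_simps power2_eq_square)

lemma PP_interp:
  assumes "D > 1" "1 \<le> d" "d \<le> D"
  shows "PP a S R d \<le> max (PP a S R 1) (PP a S R D)"
proof -
  have id: "(D-1) * PP a S R d = (D-d) * PP a S R 1 + (d-1) * PP a S R D + (D-1)*(d-1)*(d-D)"
    unfolding PP_def by (simp add: algebra_simps power2_eq_square)
  have "(D-1)*(d-1)*(d-D) \<le> 0" using assms by (intro mult_nonneg_nonpos) auto
  moreover have "(D-d) * PP a S R 1 \<le> (D-d) * max (PP a S R 1) (PP a S R D)"
    using assms by (intro mult_left_mono) auto
  moreover have "(d-1) * PP a S R D \<le> (d-1) * max (PP a S R 1) (PP a S R D)"
    using assms by (intro mult_left_mono) auto
  ultimately have "(D-1) * PP a S R d \<le> (D-1) * max (PP a S R 1) (PP a S R D)"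
    unfolding id by (simp add: algebra_simps)
  then show ?thesis using assms by simp
qed

lemma decay_H:
  assumes s: "\<sigma> > 0" and D: "D > 1" and P1: "PP a (s*\<sigma>^2) (r*\<sigma>^2) 1 < 0" and PD: "PP a (s*\<sigma>^2) (r*\<sigma>^2) D < 0"
  shows "\<exists>\<delta>>0. \<forall>c. (1 - D)/(2*\<sigma>^2) \<le> c \<longrightarrow> c \<le> 0 \<longrightarrow> ff a \<sigma> s r c \<le> c - \<delta>"
proof -
  define m where "m = max (PP a (s*\<sigma>^2) (r*\<sigma>^2) 1) (PP a (s*\<sigma>^2) (r*\<sigma>^2) D)"
  have m0: "m < 0" using P1 PD unfolding m_def by simp
  define \<delta> where "\<delta> = - m / (2*D*\<sigma>^2)"
  have "\<delta> > 0" using m0 D s unfolding \<delta>_def by (simp add: divide_neg_pos)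
  moreover have "ff a \<sigma> s r c \<le> c - \<delta>" if c1: "(1 - D)/(2*\<sigma>^2) \<le> c" and c2: "c \<le> 0" for c
  proof -
    define d where "d = 1 - 2*c*\<sigma>^2"
    have s2: "\<sigma>^2 > 0" using s by simp
    have d1: "1 \<le> d" using c2 s2 unfolding d_def by (simp add: mult_nonpos_nonneg)
    have "2*c*\<sigma>^2 \<ge> 1 - D" using c1 s2 by (simp add: field_simps)
    then have dD: "d \<le> D" unfolding d_def by simp
    have Pd: "PP a (s*\<sigma>^2) (r*\<sigma>^2) d \<le> m" unfolding m_def using PP_interp[OF D d1 dD] .
    have "ff a \<sigma> s r c - c = PP a (s*\<sigma>^2) (r*\<sigma>^2) d / (2*d*\<sigma>^2)"
      using ff_poly[OF s, of c] d1 unfolding d_def by simp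
    also have "\<dots> \<le> m / (2*d*\<sigma>^2)"
      using Pd d1 s2 by (intro divide_right_mono) auto
    also have "\<dots> \<le> m / (2*D*\<sigma>^2)"
      using m0 d1 dD s2 by (intro divide_left_mono_neg mult_right_mono) auto
    finally show ?thesis unfolding \<delta>_def by simp
  qed
  ultimately show ?thesis by blast
qed

lemma JJ_decay:
  assumes s: "\<sigma> > 0" and D: "D > 1" and P1: "PP a (s*\<sigma>^2) (r*\<sigma>^2) 1 < 0" and PD: "PP a (s*\<sigma>^2) (r*\<sigma>^2) D < 0"
  shows "\<exists>k. \<forall>n\<ge>k. JJ a \<sigma> s r n 0 \<le> ennreal (D powr (-(real n - real k)/2))"
proof -
  obtain \<delta> where dl: "\<delta> > 0" and H: "\<And>c. (1 - D)/(2*\<sigma>^2) \<le> c \<Longrightarrow> c \<le> 0 \<Longrightarrow> ff a \<sigma> s r c \<le> c - \<delta>"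
    using decay_H[OF s D P1 PD] by blast
  define c' where "c' = (1 - D)/(2*\<sigma>^2)"
  have c': "1 - 2*c'*\<sigma>^2 = D" using s unfolding c'_def by (simp add: field_simps)
  have c'0: "c' \<le> 0" using D s unfolding c'_def by (simp add: divide_nonpos_pos)
  define k where "k = nat \<lceil>- c' / \<delta>\<rceil>"
  have "real k \<ge> - c' / \<delta>" unfolding k_def by linarith
  then have kk: "0 - real k * \<delta> \<le> c'" using dl by (simp add: field_simps)
  have "JJ a \<sigma> s r n 0 \<le> ennreal (D powr (-(real n - real k)/2))" if "n \<ge> k" for n
  proof -
    have "JJ a \<sigma> s r ((n - k) + k) 0 \<le> ennreal (D powr (-(real (n - k))/2))"
      using JJ_phaseB[OF s D c' dl, of a s r 0 k "n - k"] H c'0 kk unfolding c'_def by simp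
    then show ?thesis using that by (simp add: of_nat_diff)
  qed
  then show ?thesis by blast
qed



lemma transfer:
  fixes M :: "'w measure" and Z :: "nat \<Rightarrow> 'w \<Rightarrow> real"
  assumes P: "prob_space M" and s: "\<sigma> > 0"
    and ind: "prob_space.indep_vars M (\<lambda>_. borel) Z {1..}"
    and dis: "\<And>i. i \<ge> 1 \<Longrightarrow> distributed M lborel (Z i) (normal_density 0 \<sigma>)"
    and n: "n \<ge> 1"
    and hm: "h \<in> borel_measurable (PiM {1..n} (\<lambda>_. NN \<sigma>))"
    and hc: "\<And>x x'. (\<And>j. j \<in> {1..n} \<Longrightarrow> x j = x' j) \<Longrightarrow> h x = h x'"
  shows "(\<integral>\<^sup>+\<omega>. h (\<lambda>i. Z i \<omega>) \<partial>M) = (\<integral>\<^sup>+x. h x \<partial>PiM {1..n} (\<lambda>_. NN \<sigma>))"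
proof -
  interpret prob_space M by (rule P)
  let ?I = "{1..n}"
  let ?X = "\<lambda>\<omega>. \<lambda>i\<in>?I. Z i \<omega>"
  have Zm: "Z i \<in> borel_measurable M" if "i \<in> ?I" for i
    using distributed_measurable[OF dis, of i] that by simp
  have Xm: "?X \<in> measurable M (PiM ?I (\<lambda>_. borel))"
    by (rule measurable_restrict) (rule Zm)
  have ind': "indep_vars (\<lambda>_. borel) Z ?I"
    by (rule indep_vars_subset[OF ind]) auto
  have "distr M (PiM ?I (\<lambda>_. borel)) ?X = PiM ?I (\<lambda>i. distr M borel (Z i))"
    using indep_vars_iff_distr_eq_PiM'[where I="{1..n}" and M'="\<lambda>_. borel" and X=Z] ind' Zm n by auto
  also have "\<dots> = PiM ?I (\<lambda>_. NN \<sigma>)"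
  proof (rule PiM_cong)
    fix i assume i: "i \<in> ?I"
    have "distr M borel (Z i) = distr M lborel (Z i)"
      by (rule distr_cong) auto
    also have "\<dots> = NN \<sigma>" unfolding NN_def using distributed_distr_eq_density[OF dis, of i] i by simp
    finally show "distr M borel (Z i) = NN \<sigma>" .
  qed simp
  finally have dX: "distr M (PiM ?I (\<lambda>_. borel)) ?X = PiM ?I (\<lambda>_. NN \<sigma>)" .
  have hm': "h \<in> borel_measurable (PiM ?I (\<lambda>_. borel))"
  proof -
    have "sets (PiM ?I (\<lambda>_. NN \<sigma>)) = sets (PiM ?I (\<lambda>_. borel))"
      by (rule sets_PiM_cong) auto
    then show ?thesis using hm measurable_cong_sets[OF _ refl] by metis
  qed
  have "(\<integral>\<^sup>+\<omega>. h (\<lambda>i. Z i \<omega>) \<partial>M) = (\<integral>\<^sup>+\<omega>. h (?X \<omega>) \<partial>M)"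
    by (intro nn_integral_cong hc) auto
  also have "\<dots> = (\<integral>\<^sup>+x. h x \<partial>distr M (PiM ?I (\<lambda>_. borel)) ?X)"
    by (rule nn_integral_distr[symmetric]) (rule Xm, simp only: measurable_distr_eq1 hm')
  also have "\<dots> = (\<integral>\<^sup>+x. h x \<partial>PiM ?I (\<lambda>_. NN \<sigma>))" unfolding dX ..
  finally show ?thesis .
qed

lemma AR_uu: "AR_U a Z i \<omega> = uu a (\<lambda>j. Z j \<omega>) i"
  by (induction i) auto



lemma tail_bound:
  fixes M :: "'w measure" and Z :: "nat \<Rightarrow> 'w \<Rightarrow> real" and E :: "nat \<Rightarrow> 'w set"
  assumes P: "prob_space M" and s: "\<sigma> > 0"
    and ind: "prob_space.indep_vars M (\<lambda>_. borel) Z {1..}"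
    and dis: "\<And>i. i \<ge> 1 \<Longrightarrow> distributed M lborel (Z i) (normal_density 0 \<sigma>)"
    and Em: "\<And>n. E n \<in> sets M"
    and EV: "\<And>n \<omega>. \<omega> \<in> E n \<Longrightarrow> VV a s r (\<lambda>i. Z i \<omega>) n \<ge> 0"
    and D: "D > 1" and P1: "PP a (s*\<sigma>^2) (r*\<sigma>^2) 1 < 0" and PD: "PP a (s*\<sigma>^2) (r*\<sigma>^2) D < 0"
  shows "\<exists>k. \<forall>n\<ge>k. measure M (E n) \<le> D powr (-(real n - real k)/2)"
proof -
  interpret prob_space M by (rule P)
  obtain k where k: "\<And>n. n \<ge> k \<Longrightarrow> JJ a \<sigma> s r n 0 \<le> ennreal (D powr (-(real n - real k)/2))"
    using JJ_decay[OF s D P1 PD] by blast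
  have "measure M (E n) \<le> D powr (-(real n - real (max k 1))/2)" if n: "n \<ge> max k 1" for n
  proof -
    have sub: "{1..n} \<subseteq> {1..n}" by simp
    note h1 = VV_meas[OF sub, of a s r \<sigma>]
    note h2 = uu_meas[OF sub, of a \<sigma>]
    have hm: "(\<lambda>x. ennreal (exp (VV a s r x n + 0 * (uu a x n)^2))) \<in> borel_measurable (PiM {1..n} (\<lambda>_. NN \<sigma>))"
      by (rule measurable_compose[OF measurable_compose[OF borel_measurable_add[OF h1
          borel_measurable_times[OF borel_measurable_const borel_measurable_power[OF h2]]] borel_measurable_exp] measurable_ennreal])
    have "emeasure M (E n) = (\<integral>\<^sup>+\<omega>. indicator (E n) \<omega> \<partial>M)"
      using Em by simp
    also have "\<dots> \<le> (\<integral>\<^sup>+\<omega>. ennreal (exp (VV a s r (\<lambda>i. Z i \<omega>) n + 0 * (uu a (\<lambda>i. Z i \<omega>) n)^2)) \<partial>M)"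
    proof (intro nn_integral_mono)
      fix \<omega>
      show "indicator (E n) \<omega> \<le> ennreal (exp (VV a s r (\<lambda>i. Z i \<omega>) n + 0 * (uu a (\<lambda>i. Z i \<omega>) n)^2))"
      proof (cases "\<omega> \<in> E n")
        case True
        then have "exp (VV a s r (\<lambda>i. Z i \<omega>) n) \<ge> 1" using EV by simp
        then show ?thesis using True by simp
      qed simp
    qed
    also have "\<dots> = JJ a \<sigma> s r n 0"
      unfolding JJ_def
      by (rule transfer[OF P s ind dis _ hm]) (use n in \<open>auto intro!: arg_cong[where f="\<lambda>v. ennreal (exp v)"] VV_cong uu_cong\<close>)
    also have "\<dots> \<le> ennreal (D powr (-(real n - real k)/2))" using k n by simp
    also have "\<dots> \<le> ennreal (D powr (-(real n - real (max k 1))/2))"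
      using D by (intro ennreal_leI powr_mono) auto
    finally have "emeasure M (E n) \<le> ennreal (D powr (-(real n - real (max k 1))/2))" .
    then show ?thesis by (simp add: measure_def enn2real_leI)
  qed
  then show ?thesis by blast
qed



lemma sum_shift0:
  fixes f :: "nat \<Rightarrow> real"
  assumes "f 0 = 0"
  shows "(\<Sum>i<n. f i) = (\<Sum>i=1..n-1. f i)"
proof (rule sum.mono_neutral_cong_right)
  show "finite {..<n}" by simp
  show "{1..n-1} \<subseteq> {..<n}" by auto
  show "\<forall>i\<in>{..<n} - {1..n-1}. f i = 0"
  proof
    fix i assume "i \<in> {..<n} - {1..n-1}"
    then have "i = 0" by auto
    then show "f i = 0" using assms by simp
  qed
qed simp

lemma VV_expr:
  "VV a s r x n = s * (\<Sum>i=1..n-1. uu a x i * uu a x (i+1)) - (s*a + r) * (\<Sum>i=1..n-1. (uu a x i)^2)"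
proof -
  have "VV a s r x n = (\<Sum>i<n. s * (uu a x i * uu a x (i+1)) - (s*a + r) * (uu a x i)^2)"
    unfolding VV_def by (intro sum.cong refl) (simp add: algebra_simps power2_eq_square)
  also have "\<dots> = (\<Sum>i=1..n-1. s * (uu a x i * uu a x (i+1)) - (s*a + r) * (uu a x i)^2)"
    by (rule sum_shift0) simp
  also have "\<dots> = s * (\<Sum>i=1..n-1. uu a x i * uu a x (i+1)) - (s*a + r) * (\<Sum>i=1..n-1. (uu a x i)^2)"
    by (simp add: sum_subtractf sum_distrib_left)
  finally show ?thesis .
qed

lemma aML_uu: "a_ML (uu a x) n = (\<Sum>i=1..n-1. uu a x i * uu a x (i+1)) / (\<Sum>i=1..n-1. (uu a x i)^2)"
  unfolding a_ML_def ..

lemma upper_pw: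
  assumes a: "a > 1" and e: "\<eta> > 0" and l: "t > 0" and ev: "a_ML (uu a x) n - a > \<eta>"
  shows "VV a t (t*\<eta>) x n \<ge> 0"
proof -
  define A where "A = (\<Sum>i=1..n-1. uu a x i * uu a x (i+1))"
  define B where "B = (\<Sum>i=1..n-1. (uu a x i)^2)"
  have B0: "B \<ge> 0" unfolding B_def by (intro sum_nonneg) simp
  have ev': "A / B - a > \<eta>" using ev unfolding aML_uu A_def B_def .
  have "B \<noteq> 0"
  proof
    assume "B = 0"
    then show False using ev' a e by simp
  qed
  with B0 have Bp: "B > 0" by simp
  then have "A - a*B > \<eta>*B" using ev' by (simp add: field_simps)
  then have "A - (a + \<eta>)*B \<ge> 0" by (simp add: algebra_simps)
  then have "t * (A - (a + \<eta>)*B) \<ge> 0" using l by simp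
  moreover have "VV a t (t*\<eta>) x n = t * (A - (a + \<eta>)*B)"
    unfolding VV_expr A_def B_def by (simp add: algebra_simps)
  ultimately show ?thesis by simp
qed

lemma lower_pw:
  assumes a: "a > 1" and e: "\<eta> > 0" and l: "t > 0" and ev: "a_ML (uu a x) n - a < - \<eta>"
  shows "VV a (-t) (t*\<eta>) x n \<ge> 0"
proof -
  define A where "A = (\<Sum>i=1..n-1. uu a x i * uu a x (i+1))"
  define B where "B = (\<Sum>i=1..n-1. (uu a x i)^2)"
  have B0: "B \<ge> 0" unfolding B_def by (intro sum_nonneg) simp
  have ev': "A / B - a < - \<eta>" using ev unfolding aML_uu A_def B_def .
  have VVe: "VV a (-t) (t*\<eta>) x n = - t * (A - (a - \<eta>)*B)"
    unfolding VV_expr A_def B_def by (simp add: algebra_simps)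
  show ?thesis
  proof (cases "B = 0")
    case True
    then have "\<forall>i\<in>{1..n-1}. (uu a x i)^2 = 0"
      unfolding B_def by (subst sum_nonneg_eq_0_iff[symmetric]) auto
    then have "A = 0" unfolding A_def by (intro sum.neutral) auto
    then show ?thesis using VVe True by simp
  next
    case False
    with B0 have Bp: "B > 0" by simp
    then have "A - a*B < - \<eta>*B" using ev' by (simp add: field_simps)
    then have "A - (a - \<eta>)*B \<le> 0" by (simp add: algebra_simps)
    then have "- t * (A - (a - \<eta>)*B) \<ge> 0" using l by (simp add: mult_nonpos_nonpos mult_le_0_iff)
    then show ?thesis using VVe by simp
  qed
qed

lemma AR_meas:
  assumes Zm: "\<And>i. i \<ge> 1 \<Longrightarrow> Z i \<in> borel_measurable M"
  shows "AR_U a Z i \<in> borel_measurable M"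
proof (induction i)
  case 0 then show ?case by simp
next
  case (Suc i)
  have "(\<lambda>\<omega>. a * AR_U a Z i \<omega> + Z (Suc i) \<omega>) \<in> borel_measurable M"
    by (rule borel_measurable_add[OF borel_measurable_times[OF borel_measurable_const Suc.IH] Zm]) simp
  then show ?case by (simp only: AR_U.simps)
qed

lemma aML_meas:
  assumes Zm: "\<And>i. i \<ge> 1 \<Longrightarrow> Z i \<in> borel_measurable M"
  shows "(\<lambda>\<omega>. a_ML (\<lambda>i. AR_U a Z i \<omega>) n) \<in> borel_measurable M"
proof -
  have m: "\<And>i. AR_U a Z i \<in> borel_measurable M" by (rule AR_meas[OF Zm])
  have "(\<lambda>\<omega>. (\<Sum>i=1..n-1. AR_U a Z i \<omega> * AR_U a Z (i+1) \<omega>) / (\<Sum>i=1..n-1. (AR_U a Z i \<omega>)^2)) \<in> borel_measurable M"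
    by (intro borel_measurable_divide borel_measurable_sum borel_measurable_times borel_measurable_power m)
  then show ?thesis unfolding a_ML_def .
qed



lemma nd_mono_abs:
  assumes "\<bar>y\<bar> \<le> K"
  shows "normal_density 0 \<sigma> K \<le> normal_density 0 \<sigma> y"
proof -
  have "y^2 \<le> K^2" using power_mono[OF assms abs_ge_zero, of 2] by simp
  then have "(- ((K - 0)^2))/(2*\<sigma>^2) \<le> (- ((y - 0)^2))/(2*\<sigma>^2)"
    by (simp add: divide_right_mono)
  then show ?thesis unfolding normal_density_def by (intro mult_left_mono) auto
qed

lemma NN_interval_lb:
  assumes s: "\<sigma> > 0" and pq: "p < q" and pK: "\<bar>p\<bar> \<le> K" and qK: "\<bar>q\<bar> \<le> K"
    and S: "S \<in> sets borel" and sub: "\<And>y. p < y \<Longrightarrow> y < q \<Longrightarrow> y \<in> S"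
  shows "ennreal ((q - p) * normal_density 0 \<sigma> K) \<le> emeasure (NN \<sigma>) S"
proof -
  have "{p<..<q} \<subseteq> S" using sub by auto
  then have "emeasure (NN \<sigma>) {p<..<q} \<le> emeasure (NN \<sigma>) S"
    using S by (intro emeasure_mono) simp_all
  moreover have "ennreal ((q - p) * normal_density 0 \<sigma> K) \<le> emeasure (NN \<sigma>) {p<..<q}"
  proof -
    have "emeasure (NN \<sigma>) {p<..<q} = (\<integral>\<^sup>+y. ennreal (normal_density 0 \<sigma> y) * indicator {p<..<q} y \<partial>lborel)"
      unfolding NN_def by (rule emeasure_density) auto
    also have "\<dots> \<ge> (\<integral>\<^sup>+y. ennreal (normal_density 0 \<sigma> K) * indicator {p<..<q} y \<partial>lborel)"
    proof (intro nn_integral_mono)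
      fix y
      show "ennreal (normal_density 0 \<sigma> K) * indicator {p<..<q} y \<le> ennreal (normal_density 0 \<sigma> y) * indicator {p<..<q} y"
      proof (cases "y \<in> {p<..<q}")
        case True
        then have "\<bar>y\<bar> \<le> K" using pK qK by auto
        then show ?thesis using True by (simp add: nd_mono_abs)
      qed simp
    qed
    also have "(\<integral>\<^sup>+y. ennreal (normal_density 0 \<sigma> K) * indicator {p<..<q} y \<partial>lborel) = ennreal (normal_density 0 \<sigma> K) * ennreal (q - p)"
      using pq by (subst nn_integral_cmult_indicator) auto
    also have "\<dots> = ennreal ((q - p) * normal_density 0 \<sigma> K)"
      using pq by (simp add: ennreal_mult'[symmetric] mult.commute)
    finally show ?thesis .
  qed
  ultimately show ?thesis by (meson order_trans)
qed

definition Gp :: "real \<Rightarrow> real \<Rightarrow> nat \<Rightarrow> (nat \<Rightarrow> real) \<Rightarrow> bool" where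
  "Gp a \<kappa> m x \<longleftrightarrow> (\<forall>i\<in>{1..m}. 1 < uu a x i / \<kappa>^i \<and> uu a x i / \<kappa>^i < 2)"

lemma Gp_cong: "(\<And>j. j \<in> {1..m} \<Longrightarrow> x j = x' j) \<Longrightarrow> Gp a \<kappa> m x = Gp a \<kappa> m x'"
proof -
  assume h: "\<And>j. j \<in> {1..m} \<Longrightarrow> x j = x' j"
  have "\<And>i. i \<in> {1..m} \<Longrightarrow> uu a x i = uu a x' i"
    using h by (intro uu_cong) auto
  then show ?thesis unfolding Gp_def by auto
qed

lemma Gp_sets: "{x \<in> space (PiM I (\<lambda>_. NN \<sigma>)). Gp a \<kappa> m x} \<in> sets (PiM I (\<lambda>_. NN \<sigma>))" if "{1..m} \<subseteq> I"
  unfolding Gp_def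
proof (intro sets.sets_Collect_finite_All)
  fix i assume i: "i \<in> {1..m}"
  then have sub: "{1..i} \<subseteq> I" using that by auto
  have fm: "(\<lambda>x. uu a x i / \<kappa>^i) \<in> borel_measurable (PiM I (\<lambda>_. NN \<sigma>))"
    by (rule borel_measurable_divide[OF uu_meas[OF sub] borel_measurable_const])
  have "(\<lambda>x. uu a x i / \<kappa>^i) -` {1<..<2} \<inter> space (PiM I (\<lambda>_. NN \<sigma>)) \<in> sets (PiM I (\<lambda>_. NN \<sigma>))"
    by (rule measurable_sets[OF fm]) simp
  moreover have "(\<lambda>x. uu a x i / \<kappa>^i) -` {1<..<2} \<inter> space (PiM I (\<lambda>_. NN \<sigma>)) =
     {x \<in> space (PiM I (\<lambda>_. NN \<sigma>)). 1 < uu a x i / \<kappa>^i \<and> uu a x i / \<kappa>^i < 2}" by auto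
  ultimately show "{x \<in> space (PiM I (\<lambda>_. NN \<sigma>)). 1 < uu a x i / \<kappa>^i \<and> uu a x i / \<kappa>^i < 2} \<in> sets (PiM I (\<lambda>_. NN \<sigma>))" by simp
qed simp

lemma Gp_bound: "Gp a \<kappa> m x \<Longrightarrow> \<kappa> \<noteq> 0 \<Longrightarrow> \<bar>uu a x m\<bar> \<le> 2 * \<bar>\<kappa>\<bar>^m"
proof (cases m)
  case 0 then show ?thesis by simp
next
  case (Suc k)
  assume G: "Gp a \<kappa> m x" and k: "\<kappa> \<noteq> 0"
  have mm: "m \<in> {1..m}" using Suc by simp
  have "1 < uu a x m / \<kappa>^m \<and> uu a x m / \<kappa>^m < 2" using G mm unfolding Gp_def by blast
  then have "\<bar>uu a x m / \<kappa>^m\<bar> \<le> 2" by (simp only: abs_le_iff) linarith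
  then show ?thesis using k by (simp add: abs_divide power_abs field_simps)
qed

lemma Gp_step_lb:
  assumes s: "\<sigma> > 0" and a: "a > 0" and k: "\<kappa> \<noteq> 0" and G: "Gp a \<kappa> m x"
  shows "ennreal (\<bar>\<kappa>\<bar>^(Suc m) * normal_density 0 \<sigma> (2*\<bar>\<kappa>\<bar>^(Suc m) + a * (2*\<bar>\<kappa>\<bar>^m)))
     \<le> emeasure (NN \<sigma>) {y. 1 < (a * uu a x m + y) / \<kappa>^(Suc m) \<and> (a * uu a x m + y) / \<kappa>^(Suc m) < 2}"
proof -
  let ?u = "uu a x m"
  let ?k = "\<kappa>^(Suc m)"
  define p where "p = min ?k (2*?k) - a*?u"
  define q where "q = max ?k (2*?k) - a*?u"
  let ?K = "2*\<bar>\<kappa>\<bar>^(Suc m) + a * (2*\<bar>\<kappa>\<bar>^m)"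
  have k0: "?k \<noteq> 0" using k by simp
  have ub: "\<bar>?u\<bar> \<le> 2*\<bar>\<kappa>\<bar>^m" by (rule Gp_bound[OF G k])
  have au: "\<bar>a*?u\<bar> \<le> a*(2*\<bar>\<kappa>\<bar>^m)" using ub a by (simp add: abs_mult)
  have kk: "\<bar>?k\<bar> = \<bar>\<kappa>\<bar>^(Suc m)" by (rule power_abs)
  have qp: "q - p = \<bar>\<kappa>\<bar>^(Suc m)" unfolding p_def q_def using kk by (cases "?k > 0") auto
  have pq: "p < q" proof - have "\<bar>\<kappa>\<bar>^(Suc m) > 0" using k by simp then show ?thesis using qp by linarith qed
  have m1: "\<bar>min ?k (2*?k)\<bar> \<le> 2*\<bar>?k\<bar>" "\<bar>max ?k (2*?k)\<bar> \<le> 2*\<bar>?k\<bar>" by (cases "?k > 0"; simp)+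
  have pK: "\<bar>p\<bar> \<le> ?K" unfolding p_def using au kk m1 abs_triangle_ineq4[of "min ?k (2*?k)" "a*?u"] by linarith
  have qK: "\<bar>q\<bar> \<le> ?K" unfolding q_def using au kk m1 abs_triangle_ineq4[of "max ?k (2*?k)" "a*?u"] by linarith
  have S: "{y. 1 < (a * ?u + y) / ?k \<and> (a * ?u + y) / ?k < 2} \<in> sets borel" by measurable
  have sub: "y \<in> {y. 1 < (a * ?u + y) / ?k \<and> (a * ?u + y) / ?k < 2}" if "p < y" "y < q" for y
  proof (cases "?k > 0")
    case True
    then have "?k < a*?u + y" "a*?u + y < 2*?k" using that unfolding p_def q_def by auto
    then show ?thesis using True by (simp add: field_simps)
  next
    case False
    then have kn: "?k < 0" using k0 by linarith
    then have "2*?k < a*?u + y" "a*?u + y < ?k" using that unfolding p_def q_def by auto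
    then show ?thesis using kn by (simp add: field_simps)
  qed
  show ?thesis using NN_interval_lb[OF s pq pK qK S sub] qp by simp
qed



lemma Gp_pos:
  assumes s: "\<sigma> > 0" and a: "a > 0" and k: "\<kappa> \<noteq> 0"
  shows "emeasure (PiM {1..m} (\<lambda>_. NN \<sigma>)) {x \<in> space (PiM {1..m} (\<lambda>_. NN \<sigma>)). Gp a \<kappa> m x} > 0"
proof (induction m)
  case 0
  show ?case by (simp add: PiM_empty Gp_def)
next
  case (Suc m)
  interpret product_prob_space "\<lambda>_::nat. NN \<sigma>" using pps_NN[OF s] .
  let ?P = "\<lambda>I. PiM I (\<lambda>_. NN \<sigma>)"
  let ?G = "{x \<in> space (?P {1..m}). Gp a \<kappa> m x}"
  let ?G' = "{x \<in> space (?P (insert (Suc m) {1..m})). Gp a \<kappa> (Suc m) x}"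
  define c where "c = \<bar>\<kappa>\<bar>^(Suc m) * normal_density 0 \<sigma> (2*\<bar>\<kappa>\<bar>^(Suc m) + a * (2*\<bar>\<kappa>\<bar>^m))"
  have c0: "c > 0" unfolding c_def using k s by (simp add: normal_density_pos)
  have ins: "{1..Suc m} = insert (Suc m) {1..m}" by auto
  have G'sets: "?G' \<in> sets (?P (insert (Suc m) {1..m}))" by (rule Gp_sets) auto
  have Gsets: "?G \<in> sets (?P {1..m})" by (rule Gp_sets) auto
  have "emeasure (?P {1..Suc m}) {x \<in> space (?P {1..Suc m}). Gp a \<kappa> (Suc m) x} = emeasure (?P (insert (Suc m) {1..m})) ?G'"
    unfolding ins ..
  also have "\<dots> = (\<integral>\<^sup>+x. indicator ?G' x \<partial>?P (insert (Suc m) {1..m}))"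
    using G'sets by simp
  also have "\<dots> = (\<integral>\<^sup>+x. (\<integral>\<^sup>+y. indicator ?G' (x(Suc m := y)) \<partial>NN \<sigma>) \<partial>?P {1..m})"
    by (rule product_nn_integral_insert) (use G'sets in auto)
  also have "\<dots> \<ge> (\<integral>\<^sup>+x. ennreal c * indicator ?G x \<partial>?P {1..m})"
  proof (intro nn_integral_mono)
    fix x assume xs: "x \<in> space (?P {1..m})"
    show "ennreal c * indicator ?G x \<le> (\<integral>\<^sup>+y. indicator ?G' (x(Suc m := y)) \<partial>NN \<sigma>)"
    proof (cases "Gp a \<kappa> m x")
      case False then show ?thesis by simp
    next
      case True
      let ?S = "{y. 1 < (a * uu a x m + y) / \<kappa>^(Suc m) \<and> (a * uu a x m + y) / \<kappa>^(Suc m) < 2}"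
      have Ss: "?S \<in> sets borel" by measurable
      have "ennreal c \<le> emeasure (NN \<sigma>) ?S"
        unfolding c_def by (rule Gp_step_lb[OF s a k True])
      also have "\<dots> = (\<integral>\<^sup>+y. indicator ?S y \<partial>NN \<sigma>)" using Ss by simp
      also have "\<dots> \<le> (\<integral>\<^sup>+y. indicator ?G' (x(Suc m := y)) \<partial>NN \<sigma>)"
      proof (intro nn_integral_mono)
        fix y
        show "indicator ?S y \<le> (indicator ?G' (x(Suc m := y)) :: ennreal)"
        proof (cases "y \<in> ?S")
          case False then show ?thesis by simp
        next
          case yS: True
          have sp: "x(Suc m := y) \<in> space (?P (insert (Suc m) {1..m}))"
            using xs by (auto simp: space_PiM PiE_def extensional_def)
          have "Gp a \<kappa> (Suc m) (x(Suc m := y))"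
            unfolding Gp_def
          proof
            fix i assume i: "i \<in> {1..Suc m}"
            show "1 < uu a (x(Suc m := y)) i / \<kappa>^i \<and> uu a (x(Suc m := y)) i / \<kappa>^i < 2"
            proof (cases "i = Suc m")
              case True
              have e: "uu a (x(Suc m := y)) (Suc m) = a * uu a x m + y" using uu_upd[of m m a x y] by simp
              show ?thesis unfolding True e using yS by simp
            next
              case False
              then have "i \<le> m" "i \<in> {1..m}" using i by auto
              then show ?thesis using \<open>Gp a \<kappa> m x\<close> uu_upd[of i m a x y] unfolding Gp_def by auto
            qed
          qed
          then show ?thesis using sp yS by simp
        qed
      qed
      finally show ?thesis using True xs by simp
    qed
  qed
  also have "(\<integral>\<^sup>+x. ennreal c * indicator ?G x \<partial>?P {1..m}) = ennreal c * emeasure (?P {1..m}) ?G"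
    using Gsets by (rule nn_integral_cmult_indicator)
  finally have "ennreal c * emeasure (?P {1..m}) ?G \<le> emeasure (?P {1..Suc m}) {x \<in> space (?P {1..Suc m}). Gp a \<kappa> (Suc m) x}" .
  moreover have "ennreal c * emeasure (?P {1..m}) ?G > 0"
    using c0 Suc.IH by (simp add: ennreal_zero_less_mult_iff)
  ultimately show ?case by (meson less_le_trans)
qed



lemma Gp_terms:
  assumes k: "\<kappa> \<noteq> 0" and G: "Gp a \<kappa> n x" and i: "i \<in> {1..n-1}"
  shows "uu a x i \<noteq> 0"
    and "\<kappa> > 0 \<Longrightarrow> uu a x i * uu a x (i+1) \<ge> \<kappa>/2 * (uu a x i)^2"
    and "\<kappa> < 0 \<Longrightarrow> uu a x i * uu a x (i+1) \<le> \<kappa>/2 * (uu a x i)^2"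
proof -
  define w1 where "w1 = uu a x i / \<kappa>^i"
  define w2 where "w2 = uu a x (i+1) / \<kappa>^(i+1)"
  have i1: "i \<in> {1..n}" "i+1 \<in> {1..n}" using i by auto
  have w1b: "1 < w1" "w1 < 2" using G i1(1) unfolding Gp_def w1_def by blast+
  have w2b: "1 < w2" "w2 < 2" using G i1(2) unfolding Gp_def w2_def by blast+
  have ki: "\<kappa>^i \<noteq> 0" using k by simp
  have u1: "uu a x i = \<kappa>^i * w1" unfolding w1_def using ki by simp
  have u2: "uu a x (i+1) = \<kappa>^i * \<kappa> * w2" unfolding w2_def using ki k by simp
  show "uu a x i \<noteq> 0" using u1 ki w1b by simp
  have diff: "uu a x i * uu a x (i+1) - \<kappa>/2 * (uu a x i)^2 = (\<kappa>^i)^2 * \<kappa> * (w1 * (w2 - w1/2))"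
    unfolding u1 u2 by (simp add: algebra_simps power2_eq_square)
  have pos: "(\<kappa>^i)^2 * (w1 * (w2 - w1/2)) > 0" using ki w1b w2b by (intro mult_pos_pos) auto
  show "\<kappa> > 0 \<Longrightarrow> uu a x i * uu a x (i+1) \<ge> \<kappa>/2 * (uu a x i)^2"
  proof -
    assume "\<kappa> > 0"
    then have "(\<kappa>^i)^2 * \<kappa> * (w1 * (w2 - w1/2)) \<ge> 0" using pos
      by (metis mult.commute mult.left_commute mult_pos_pos less_imp_le)
    then show ?thesis using diff by simp
  qed
  show "\<kappa> < 0 \<Longrightarrow> uu a x i * uu a x (i+1) \<le> \<kappa>/2 * (uu a x i)^2"
  proof -
    assume "\<kappa> < 0"
    then have "(\<kappa>^i)^2 * \<kappa> * (w1 * (w2 - w1/2)) \<le> 0" using pos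
      by (metis mult.commute mult.left_commute mult_pos_neg less_imp_le)
    then show ?thesis using diff by simp
  qed
qed

lemma Gp_B_pos:
  assumes k: "\<kappa> \<noteq> 0" and G: "Gp a \<kappa> n x" and n: "n \<ge> 2"
  shows "(\<Sum>i=1..n-1. (uu a x i)^2) > 0"
proof -
  have "1 \<in> {1..n-1}" using n by simp
  then have "uu a x 1 \<noteq> 0" using Gp_terms(1)[OF k G] by blast
  then have p: "(uu a x 1)^2 > 0" using zero_less_power2 by blast
  have "(uu a x 1)^2 \<le> (\<Sum>i=1..n-1. (uu a x i)^2)"
    using \<open>1 \<in> {1..n-1}\<close> by (intro member_le_sum) auto
  with p show ?thesis by linarith
qed

lemma Gp_upper:
  assumes a: "a > 1" and e: "\<eta> > 0" and G: "Gp a (2*(a+\<eta>+1)) n x" and n: "n \<ge> 2"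
  shows "a_ML (uu a x) n - a > \<eta>"
proof -
  let ?\<kappa> = "2*(a+\<eta>+1)"
  have k: "?\<kappa> > 0" using a e by simp
  define A where "A = (\<Sum>i=1..n-1. uu a x i * uu a x (i+1))"
  define B where "B = (\<Sum>i=1..n-1. (uu a x i)^2)"
  have Bp: "B > 0" unfolding B_def using Gp_B_pos[OF _ G n] k by simp
  have "(a+\<eta>+1) * B = (\<Sum>i=1..n-1. ?\<kappa>/2 * (uu a x i)^2)" unfolding B_def sum_distrib_left by (intro sum.cong) auto
  also have "\<dots> \<le> A" unfolding A_def using Gp_terms(2)[OF _ G] k by (intro sum_mono) auto
  finally have "(a+\<eta>+1) * B \<le> A" .
  then have "A / B \<ge> a+\<eta>+1" using Bp by (simp add: field_simps)
  then show ?thesis unfolding aML_uu A_def[symmetric] B_def[symmetric] by simp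
qed

lemma Gp_lower:
  assumes a: "a > 1" and e: "\<eta> > 0" and G: "Gp a (-2*(\<bar>a-\<eta>\<bar>+1)) n x" and n: "n \<ge> 2"
  shows "a_ML (uu a x) n - a < - \<eta>"
proof -
  let ?\<kappa> = "-2*(\<bar>a-\<eta>\<bar>+1)"
  have k: "?\<kappa> < 0" by (smt (verit) abs_ge_zero)
  define A where "A = (\<Sum>i=1..n-1. uu a x i * uu a x (i+1))"
  define B where "B = (\<Sum>i=1..n-1. (uu a x i)^2)"
  have Bp: "B > 0" unfolding B_def using Gp_B_pos[OF _ G n] k by simp
  have "A \<le> (\<Sum>i=1..n-1. ?\<kappa>/2 * (uu a x i)^2)" unfolding A_def using Gp_terms(3)[OF _ G] k by (intro sum_mono) auto
  also have "\<dots> = -(\<bar>a-\<eta>\<bar>+1) * B" unfolding B_def sum_distrib_left by (intro sum.cong) auto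
  finally have "A \<le> -(\<bar>a-\<eta>\<bar>+1) * B" .
  then have "A / B \<le> -(\<bar>a-\<eta>\<bar>+1)" using Bp by (simp add: field_simps)
  then have "A / B < a - \<eta>" by linarith
  then show ?thesis unfolding aML_uu A_def[symmetric] B_def[symmetric] by simp
qed

lemma prob_pos:
  fixes M :: "'w measure" and Z :: "nat \<Rightarrow> 'w \<Rightarrow> real"
  assumes P: "prob_space M" and s: "\<sigma> > 0" and a: "a > 0" and k: "\<kappa> \<noteq> 0"
    and ind: "prob_space.indep_vars M (\<lambda>_. borel) Z {1..}"
    and dis: "\<And>i. i \<ge> 1 \<Longrightarrow> distributed M lborel (Z i) (normal_density 0 \<sigma>)"
    and n: "n \<ge> 1"
    and Es: "E \<in> sets M"
    and EG: "\<And>\<omega>. \<omega> \<in> space M \<Longrightarrow> Gp a \<kappa> n (\<lambda>i. Z i \<omega>) \<Longrightarrow> \<omega> \<in> E"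
  shows "measure M E > 0"
proof -
  interpret prob_space M by (rule P)
  let ?P = "PiM {1..n} (\<lambda>_. NN \<sigma>)"
  let ?G = "{x \<in> space ?P. Gp a \<kappa> n x}"
  have Gs: "?G \<in> sets ?P" by (rule Gp_sets) auto
  have hm: "(\<lambda>x. indicator {x. Gp a \<kappa> n x} x :: ennreal) \<in> borel_measurable ?P"
  proof -
    have "(\<lambda>x. indicator ?G x :: ennreal) \<in> borel_measurable ?P" using Gs by simp
    moreover have "\<And>x. x \<in> space ?P \<Longrightarrow> (indicator ?G x :: ennreal) = indicator {x. Gp a \<kappa> n x} x"
      by (simp add: indicator_def)
    ultimately show ?thesis by (subst measurable_cong[symmetric]) auto
  qed
  have "0 < emeasure ?P ?G" by (rule Gp_pos[OF s a k])
  also have "emeasure ?P ?G = (\<integral>\<^sup>+x. indicator ?G x \<partial>?P)"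
    using Gs by (rule nn_integral_indicator[symmetric])
  also have "\<dots> = (\<integral>\<^sup>+x. indicator {x. Gp a \<kappa> n x} x \<partial>?P)"
    by (rule nn_integral_cong) (simp add: indicator_def)
  also have "\<dots> = (\<integral>\<^sup>+\<omega>. indicator {x. Gp a \<kappa> n x} (\<lambda>i. Z i \<omega>) \<partial>M)"
  proof (rule transfer[OF P s ind dis n hm, symmetric])
    fix x x' :: "nat \<Rightarrow> real" assume "\<And>j. j \<in> {1..n} \<Longrightarrow> x j = x' j"
    then have "Gp a \<kappa> n x = Gp a \<kappa> n x'" by (rule Gp_cong)
    then show "(indicator {x. Gp a \<kappa> n x} x :: ennreal) = indicator {x. Gp a \<kappa> n x} x'" by (simp add: indicator_def)
  qed
  also have "\<dots> \<le> (\<integral>\<^sup>+\<omega>. indicator E \<omega> \<partial>M)"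
    by (intro nn_integral_mono) (auto simp: indicator_def EG)
  also have "\<dots> = emeasure M E" using Es by simp
  finally have "0 < emeasure M E" .
  then show ?thesis by (simp add: emeasure_eq_measure)
qed



lemma quad_small:
  fixes \<alpha> \<beta> T :: real
  assumes "\<alpha> < 0" "T > 0"
  shows "\<exists>u. 0 < u \<and> u < T \<and> \<alpha> + \<beta>*u + u^2 < 0"
proof -
  define u where "u = min (T/2) (min 1 (-\<alpha>/(2*(\<bar>\<beta>\<bar>+1))))"
  have b1: "\<bar>\<beta>\<bar> + 1 > 0" by (smt (verit) abs_ge_zero)
  have q: "-\<alpha>/(2*(\<bar>\<beta>\<bar>+1)) > 0" using assms(1) b1 by (intro divide_pos_pos) auto
  have up: "u > 0" unfolding u_def min_less_iff_conj using q assms(2) by linarith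
  have uT: "u < T" unfolding u_def using assms by simp
  have u1: "u \<le> 1" unfolding u_def by simp
  have u3: "u \<le> -\<alpha>/(2*(\<bar>\<beta>\<bar>+1))" unfolding u_def by simp
  have "u^2 \<le> u" using up u1 by (simp add: power2_eq_square mult_left_le)
  moreover have "\<beta>*u \<le> \<bar>\<beta>\<bar>*u" using up by (simp add: mult_right_mono)
  moreover have "(\<bar>\<beta>\<bar>+1)*u \<le> -\<alpha>/2" using u3 b1 by (simp add: field_simps)
  ultimately have "\<alpha> + \<beta>*u + u^2 \<le> \<alpha>/2" by (simp add: algebra_simps)
  then show ?thesis using up uT assms by (intro exI[of _ u]) auto
qed

lemma PP_expand: "PP a S R D = S^2 + S*(2*a - 2*a*D) - 2*R*D + (D^2 - (a^2+1)*D + a^2)"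
  unfolding PP_def by (simp add: algebra_simps power2_eq_square)

lemma PP1_up: "PP a t (t*\<eta>) 1 = t*(t - 2*\<eta>)"
  unfolding PP_def by (simp add: algebra_simps power2_eq_square)

lemma PP1_lo: "PP a (-t) (t*\<eta>) 1 = t*(t - 2*\<eta>)"
  unfolding PP_def by (simp add: algebra_simps power2_eq_square)

lemma upper_t:
  assumes a: "a > 1" and e: "\<eta> > 0" and D1: "1 < D" and D2: "D < (a + 2*\<eta>)^2"
  shows "\<exists>t. 0 < t \<and> t < 2*\<eta> \<and> PP a t (t*\<eta>) D < 0"
proof -
  let ?T = "2*\<eta>"
  define \<alpha> where "\<alpha> = (D - 1)*(D - (a + 2*\<eta>)^2)"
  define \<beta> where "\<beta> = -2*?T - (2*a - 2*a*D - 2*\<eta>*D)"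
  have al: "\<alpha> < 0" unfolding \<alpha>_def using D1 D2 by (simp add: mult_pos_neg)
  obtain u where u: "0 < u" "u < ?T" "\<alpha> + \<beta>*u + u^2 < 0" using quad_small[OF al, of ?T \<beta>] e by auto
  have "PP a (?T - u) ((?T - u)*\<eta>) D = \<alpha> + \<beta>*u + u^2"
    unfolding PP_def \<alpha>_def \<beta>_def by (simp add: algebra_simps power2_eq_square)
  then show ?thesis using u by (intro exI[of _ "?T - u"]) auto
qed

lemma lower_t_small:
  assumes e: "\<eta> > 0" and D1: "1 < D" and D2: "D < a^2"
  shows "\<exists>t. 0 < t \<and> t < 2*\<eta> \<and> PP a (-t) (t*\<eta>) D < 0"
proof -
  define \<alpha> where "\<alpha> = (D - 1)*(D - a^2)"
  define \<beta> where "\<beta> = 2*(a - \<eta>)*D - 2*a"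
  have al: "\<alpha> < 0" unfolding \<alpha>_def using D1 D2 by (simp add: mult_pos_neg)
  obtain u where u: "0 < u" "u < 2*\<eta>" "\<alpha> + \<beta>*u + u^2 < 0" using quad_small[OF al, of "2*\<eta>" \<beta>] e by auto
  have "PP a (-u) (u*\<eta>) D = \<alpha> + \<beta>*u + u^2"
    unfolding PP_def \<alpha>_def \<beta>_def by (simp add: algebra_simps power2_eq_square)
  then show ?thesis using u by (intro exI[of _ u]) auto
qed

lemma lower_t_big:
  assumes e: "\<eta> > 0" and D1: "1 < D" and D2: "D < (2*\<eta> - a)^2"
  shows "\<exists>t. 0 < t \<and> t < 2*\<eta> \<and> PP a (-t) (t*\<eta>) D < 0"
proof -
  let ?T = "2*\<eta>"
  define \<alpha> where "\<alpha> = (D - 1)*(D - (2*\<eta> - a)^2)"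
  define \<beta> where "\<beta> = -2*?T - (2*(a - \<eta>)*D - 2*a)"
  have al: "\<alpha> < 0" unfolding \<alpha>_def using D1 D2 by (simp add: mult_pos_neg)
  obtain u where u: "0 < u" "u < ?T" "\<alpha> + \<beta>*u + u^2 < 0" using quad_small[OF al, of ?T \<beta>] e by auto
  have "PP a (-(?T - u)) ((?T - u)*\<eta>) D = \<alpha> + \<beta>*u + u^2"
    unfolding PP_def \<alpha>_def \<beta>_def by (simp add: algebra_simps power2_eq_square)
  then show ?thesis using u by (intro exI[of _ "?T - u"]) auto
qed

lemma lower_t_mid:
  assumes a: "a > 1" and e: "\<eta> > 0"
    and r1: "(a^2 - 1)/a < \<eta>" and r2: "\<eta> < (3*a + sqrt (a^2 + 8))/4"
    and D1: "1 < D" and D2: "D < (2*a*\<eta> - (a^2 - 1)) / (1 - (\<eta> - a)^2)"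
  shows "\<exists>t. 0 < t \<and> t < 2*\<eta> \<and> PP a (-t) (t*\<eta>) D < 0"
proof -
  define N where "N = 2*a*\<eta> - (a^2 - 1)"
  define Q where "Q = 1 - (\<eta> - a)^2"
  have a0: "a > 0" using a by simp
  have e1: "a^2 - 1 < a*\<eta>" using r1 a0 by (simp add: field_simps)
  (* the window is inside (a-1, a+1) *)
  define v where "v = 4*\<eta> - 3*a"
  have vup: "v < sqrt (a^2 + 8)" using r2 unfolding v_def by simp
  have vlo: "v > a - 4/a"
  proof -
    have h: "0 < 4*\<eta>*a - 4*(a*a) + 4" using e1 by (simp add: power2_eq_square algebra_simps)
    have "(4*\<eta>*a - 4*(a*a) + 4)/a > 0" using h a0 by (rule divide_pos_pos)
    moreover have "v - (a - 4/a) = (4*\<eta>*a - 4*(a*a) + 4)/a" unfolding v_def using a0 by (simp add: field_simps)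
    ultimately show ?thesis by linarith
  qed
  have v2: "v^2 < a^2 + 8"
  proof (cases "v \<ge> 0")
    case True
    then have "v^2 < (sqrt (a^2+8))^2" using vup by (intro power_strict_mono) auto
    then show ?thesis by simp
  next
    case False
    then have "-v < 4/a - a" "0 < -v" using vlo by auto
    then have "(-v)^2 < (4/a - a)^2" by (intro power_strict_mono) auto
    also have "(4/a - a)^2 = 16/a^2 - 8 + a^2" using a0 by (simp add: power2_eq_square field_simps)
    also have "16/a^2 < 16" using a by (simp add: field_simps)
    finally show ?thesis by simp
  qed
  define X where "X = 2*\<eta>^2 - 3*a*\<eta> + a^2 - 1"
  have ev: "v^2 = 8*X + a^2 + 8"
    unfolding v_def X_def by (simp add: power2_eq_square algebra_simps)
  have "X < 0" using v2 ev by linarith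
  then have key: "2*\<eta>^2 - 3*a*\<eta> + a^2 - 1 < 0" unfolding X_def .
  have Qp: "Q > 0"
  proof -
    have lo: "a - 1 < \<eta>"
    proof -
      have i1: "a*(a-1) = a^2 - a" by (simp add: power2_eq_square algebra_simps)
      have "a*(a-1) < a*\<eta>" using i1 e1 a by linarith
      then show ?thesis using a0 by simp
    qed
    have hi: "\<eta> < a + 1"
    proof (rule ccontr)
      assume "\<not> \<eta> < a + 1"
      then have h: "\<eta> \<ge> a + 1" by simp
      have idn: "2*\<eta>^2 - 3*a*\<eta> + a^2 - 1 = (\<eta> - a - 1)*(2*\<eta> - a + 1) + \<eta>"
        by (simp add: algebra_simps power2_eq_square)
      have "(\<eta> - a - 1)*(2*\<eta> - a + 1) \<ge> 0" using h a by (intro mult_nonneg_nonneg) auto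
      then show False using key idn e by linarith
    qed
    have "\<bar>\<eta> - a\<bar> < 1" using lo hi by linarith
    then have "(\<eta> - a)^2 < 1" by (simp only: abs_square_less_1)
    then show ?thesis unfolding Q_def by simp
  qed
  have Np: "N > 0"
  proof -
    have "a^2 - 1 < a*\<eta>" by (rule e1)
    then have "2*(a^2 - 1) < 2*(a*\<eta>)" by simp
    moreover have "a^2 - 1 > 0" using a by (simp add: power2_eq_square) (smt (verit) mult_less_cancel_left2 one_less_power)
    ultimately show ?thesis unfolding N_def by (simp add: algebra_simps)
  qed
  define t where "t = a - (a - \<eta>)*D"
  have QD: "Q*D < N" using D2 Qp unfolding N_def[symmetric] Q_def[symmetric] by (simp add: field_simps)
  have PPt: "PP a (-t) (t*\<eta>) D = D*(Q*D - N)"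
    unfolding PP_def t_def Q_def N_def by (simp add: algebra_simps power2_eq_square)
  have neg: "PP a (-t) (t*\<eta>) D < 0" unfolding PPt using D1 QD by (simp add: mult_pos_neg)
  define ts where "ts = a - (a - \<eta>)*(N/Q)"
  have ts_eq: "ts = \<eta>*(a*\<eta> - (a^2 - 1))/Q"
    unfolding ts_def N_def Q_def using Qp unfolding Q_def by (simp add: field_simps power2_eq_square)
  have ts0: "ts > 0" unfolding ts_eq using e e1 Qp by (simp add: divide_pos_pos)
  have ts2: "ts < 2*\<eta>"
  proof -
    have "2*\<eta> - ts = \<eta>*(1 - 2*\<eta>^2 + 3*a*\<eta> - a^2)/Q"
      unfolding ts_eq using Qp unfolding Q_def by (simp add: field_simps power2_eq_square)
    moreover have "\<eta>*(1 - 2*\<eta>^2 + 3*a*\<eta> - a^2)/Q > 0" using key e Qp by (simp add: divide_pos_pos)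
    ultimately show ?thesis by simp
  qed
  have DN: "D < N/Q" using D2 unfolding N_def Q_def .
  have "0 < t \<and> t < 2*\<eta>"
  proof (cases "a - \<eta> \<ge> 0")
    case True
    have "(a - \<eta>)*D \<le> (a - \<eta>)*(N/Q)" using True DN by (intro mult_left_mono) auto
    moreover have "(a - \<eta>)*1 \<le> (a - \<eta>)*D" using True D1 by (intro mult_left_mono) auto
    ultimately show ?thesis unfolding t_def using ts0 e unfolding ts_def by auto
  next
    case False
    have "(a - \<eta>)*D \<ge> (a - \<eta>)*(N/Q)" using False DN by (intro mult_left_mono_neg) auto
    moreover have "(a - \<eta>)*1 \<ge> (a - \<eta>)*D" using False D1 by (intro mult_left_mono_neg) auto
    ultimately show ?thesis unfolding t_def using ts2 e unfolding ts_def by auto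
  qed
  then show ?thesis using neg by blast
qed



lemma mid_NQ:
  assumes a: "a > 1" and e: "\<eta> > 0"
    and r1: "(a^2 - 1)/a < \<eta>" and r2: "\<eta> < (3*a + sqrt (a^2 + 8))/4"
  shows "2*a*\<eta> - (a^2 - 1) > 0 \<and> 1 - (\<eta> - a)^2 > 0"
proof -
  define N where "N = 2*a*\<eta> - (a^2 - 1)"
  define Q where "Q = 1 - (\<eta> - a)^2"
  have a0: "a > 0" using a by simp
  have e1: "a^2 - 1 < a*\<eta>" using r1 a0 by (simp add: field_simps)
  (* the window is inside (a-1, a+1) *)
  define v where "v = 4*\<eta> - 3*a"
  have vup: "v < sqrt (a^2 + 8)" using r2 unfolding v_def by simp
  have vlo: "v > a - 4/a"
  proof -
    have h: "0 < 4*\<eta>*a - 4*(a*a) + 4" using e1 by (simp add: power2_eq_square algebra_simps)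
    have "(4*\<eta>*a - 4*(a*a) + 4)/a > 0" using h a0 by (rule divide_pos_pos)
    moreover have "v - (a - 4/a) = (4*\<eta>*a - 4*(a*a) + 4)/a" unfolding v_def using a0 by (simp add: field_simps)
    ultimately show ?thesis by linarith
  qed
  have v2: "v^2 < a^2 + 8"
  proof (cases "v \<ge> 0")
    case True
    then have "v^2 < (sqrt (a^2+8))^2" using vup by (intro power_strict_mono) auto
    then show ?thesis by simp
  next
    case False
    then have "-v < 4/a - a" "0 < -v" using vlo by auto
    then have "(-v)^2 < (4/a - a)^2" by (intro power_strict_mono) auto
    also have "(4/a - a)^2 = 16/a^2 - 8 + a^2" using a0 by (simp add: power2_eq_square field_simps)
    also have "16/a^2 < 16" using a by (simp add: field_simps)
    finally show ?thesis by simp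
  qed
  define X where "X = 2*\<eta>^2 - 3*a*\<eta> + a^2 - 1"
  have ev: "v^2 = 8*X + a^2 + 8"
    unfolding v_def X_def by (simp add: power2_eq_square algebra_simps)
  have "X < 0" using v2 ev by linarith
  then have key: "2*\<eta>^2 - 3*a*\<eta> + a^2 - 1 < 0" unfolding X_def .
  have Qp: "Q > 0"
  proof -
    have lo: "a - 1 < \<eta>"
    proof -
      have i1: "a*(a-1) = a^2 - a" by (simp add: power2_eq_square algebra_simps)
      have "a*(a-1) < a*\<eta>" using i1 e1 a by linarith
      then show ?thesis using a0 by simp
    qed
    have hi: "\<eta> < a + 1"
    proof (rule ccontr)
      assume "\<not> \<eta> < a + 1"
      then have h: "\<eta> \<ge> a + 1" by simp
      have idn: "2*\<eta>^2 - 3*a*\<eta> + a^2 - 1 = (\<eta> - a - 1)*(2*\<eta> - a + 1) + \<eta>"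
        by (simp add: algebra_simps power2_eq_square)
      have "(\<eta> - a - 1)*(2*\<eta> - a + 1) \<ge> 0" using h a by (intro mult_nonneg_nonneg) auto
      then show False using key idn e by linarith
    qed
    have "\<bar>\<eta> - a\<bar> < 1" using lo hi by linarith
    then have "(\<eta> - a)^2 < 1" by (simp only: abs_square_less_1)
    then show ?thesis unfolding Q_def by simp
  qed
  have Np: "N > 0"
  proof -
    have "a^2 - 1 < a*\<eta>" by (rule e1)
    then have "2*(a^2 - 1) < 2*(a*\<eta>)" by simp
    moreover have "a^2 - 1 > 0" using a by (simp add: power2_eq_square) (smt (verit) mult_less_cancel_left2 one_less_power)
    ultimately show ?thesis unfolding N_def by (simp add: algebra_simps)
  qed
  show ?thesis using Np Qp unfolding N_def Q_def by simp
qed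

lemma liminf_rate:
  fixes p :: "nat \<Rightarrow> real" and L ds :: real
  assumes p01: "\<And>n. 0 \<le> p n \<and> p n \<le> 1"
    and ppos: "eventually (\<lambda>n. p n > 0) sequentially"
    and ds: "ds > 0" and L: "L = ln ds / 2"
    and bnd: "\<And>D. 1 < D \<Longrightarrow> D < ds \<Longrightarrow> \<exists>k C. C > 0 \<and> eventually (\<lambda>n. p n \<le> C * D powr (-(real n - real k)/2)) sequentially"
  shows "liminf (\<lambda>n. ereal (- (1 / real n) * ln (p n))) \<ge> ereal L"
  unfolding le_Liminf_iff
proof (intro allI impI)
  fix y assume yL: "y < ereal L"
  have nonneg: "0 \<le> - (1 / real n) * ln (p n)" for n
  proof -
    have "ln (p n) \<le> 0"
    proof (cases "p n = 0")
      case False then show ?thesis using p01[of n] by simp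
    qed simp
    then show ?thesis by (simp add: divide_nonpos_nonneg)
  qed
  show "eventually (\<lambda>n. y < ereal (- (1 / real n) * ln (p n))) sequentially"
  proof (cases "y < 0")
    case True
    have "y < ereal (- (1 / real n) * ln (p n))" for n
    proof -
      have "ereal 0 \<le> ereal (- (1 / real n) * ln (p n))" using nonneg[of n] by simp
      moreover have "y < ereal 0" using True by (simp add: zero_ereal_def)
      ultimately show ?thesis by (rule order.strict_trans2[rotated])
    qed
    then show ?thesis by simp
  next
    case False
    then obtain y' where yy: "y = ereal y'" using yL by (cases y) auto
    have y0: "0 \<le> y'" using False yy by simp
    have yL': "y' < L" using yL yy by simp
    define m where "m = (y' + L)/2"
    define D where "D = exp (2*m)"
    have m0: "m > 0" "y' < m" using y0 yL' unfolding m_def by auto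
    have D1: "1 < D" unfolding D_def using m0 by simp
    have Dds: "D < ds"
    proof -
      have "2*m < ln ds" using yL' L unfolding m_def by simp
      then have "exp (2*m) < exp (ln ds)" by simp
      then show ?thesis unfolding D_def using ds by simp
    qed
    have lnD: "ln D = 2*m" unfolding D_def by simp
    obtain k C where C: "C > 0" and ev: "eventually (\<lambda>n. p n \<le> C * D powr (-(real n - real k)/2)) sequentially"
      using bnd[OF D1 Dds] by blast
    have lim: "(\<lambda>n. m - (m * real k + ln C) / real n) \<longlonglongrightarrow> m - 0"
      by (intro tendsto_intros)
    have ev2: "eventually (\<lambda>n. y' < m - (m * real k + ln C) / real n) sequentially"
      using order_tendstoD(1)[OF lim] m0 by simp
    have ev3: "eventually (\<lambda>n. n > 0) sequentially" by (rule eventually_gt_at_top)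
    show ?thesis using ev ev2 ev3 ppos
    proof eventually_elim
      case (elim n)
      have "ln (p n) \<le> ln (C * D powr (-(real n - real k)/2))"
        using elim C by (intro ln_mono) auto
      also have "\<dots> = ln C - (real n - real k) * m"
        using C D1 lnD by (simp add: ln_mult field_simps)
      finally have "ln (p n) \<le> ln C - (real n - real k) * m" .
      then have "- (1 / real n) * ln (p n) \<ge> - (1 / real n) * (ln C - (real n - real k) * m)"
        using elim by (intro mult_left_mono_neg) auto
      also have "- (1 / real n) * (ln C - (real n - real k) * m) = m - (m * real k + ln C) / real n"
        using elim by (simp add: field_simps)
      finally show ?case using elim yy by simp
    qed
  qed
qed



lemma Iminus_char:
  assumes a: "a > 1" and e: "\<eta> > 0"
  shows "\<exists>ds>0. I_minus a \<eta> = ln ds / 2 \<and>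
     (\<forall>D. 1 < D \<longrightarrow> D < ds \<longrightarrow> (\<exists>t. 0 < t \<and> t < 2*\<eta> \<and> PP a (-t) (t*\<eta>) D < 0))"
proof -
  have a0: "a > 0" using a by simp
  consider (r1) "\<eta> \<le> (a^2 - 1)/a" | (r2) "(a^2 - 1)/a < \<eta>" "\<eta> < (3*a + sqrt (a^2 + 8))/4"
    | (r3) "\<not> \<eta> \<le> (a^2 - 1)/a" "\<not> \<eta> < (3*a + sqrt (a^2 + 8))/4" by linarith
  then show ?thesis
  proof cases
    case r1
    have I: "I_minus a \<eta> = ln a" unfolding I_minus_def Let_def using r1 by simp
    have "ln (a^2) = 2 * ln a" using a0 by (simp add: ln_realpow)
    then have "I_minus a \<eta> = ln (a^2) / 2" using I by simp
    moreover have "\<forall>D. 1 < D \<longrightarrow> D < a^2 \<longrightarrow> (\<exists>t. 0 < t \<and> t < 2*\<eta> \<and> PP a (-t) (t*\<eta>) D < 0)"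
      using lower_t_small[OF e] by blast
    moreover have "a^2 > 0" using a0 by simp
    ultimately show ?thesis by blast
  next
    case r2
    have I: "I_minus a \<eta> = (1/2) * ln ((2*a*\<eta> - (a^2 - 1)) / (1 - (\<eta> - a)^2))"
      unfolding I_minus_def Let_def using r2 by simp
    have NQ: "2*a*\<eta> - (a^2 - 1) > 0 \<and> 1 - (\<eta> - a)^2 > 0" by (rule mid_NQ[OF a e r2])
    have pos: "(2*a*\<eta> - (a^2 - 1)) / (1 - (\<eta> - a)^2) > 0" using NQ by (simp add: divide_pos_pos)
    have "\<forall>D. 1 < D \<longrightarrow> D < (2*a*\<eta> - (a^2 - 1)) / (1 - (\<eta> - a)^2) \<longrightarrow> (\<exists>t. 0 < t \<and> t < 2*\<eta> \<and> PP a (-t) (t*\<eta>) D < 0)"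
      using lower_t_mid[OF a e r2] by blast
    then show ?thesis using I pos by (intro exI[of _ "(2*a*\<eta> - (a^2 - 1)) / (1 - (\<eta> - a)^2)"]) auto
  next
    case r3
    have I: "I_minus a \<eta> = ln (2*\<eta> - a)" unfolding I_minus_def Let_def using r3 by simp
    have "sqrt (a^2 + 8) > sqrt (a^2)" by (intro real_sqrt_less_mono) simp
    then have "sqrt (a^2 + 8) > a" using a0 by simp
    then have "\<eta> > a" using r3 by simp
    then have p: "2*\<eta> - a > 0" using a0 by simp
    have "ln ((2*\<eta> - a)^2) = 2 * ln (2*\<eta> - a)" using p by (simp add: ln_realpow)
    then have "I_minus a \<eta> = ln ((2*\<eta> - a)^2) / 2" using I by simp
    moreover have "\<forall>D. 1 < D \<longrightarrow> D < (2*\<eta> - a)^2 \<longrightarrow> (\<exists>t. 0 < t \<and> t < 2*\<eta> \<and> PP a (-t) (t*\<eta>) D < 0)"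
      using lower_t_big[OF e] by blast
    moreover have "(2*\<eta> - a)^2 > 0" using p by simp
    ultimately show ?thesis by blast
  qed
qed

lemma PP_up_lo: "PP a t (t*\<eta>) D - PP a (-t) (t*\<eta>) D = 4*a*t*(1 - D)"
  unfolding PP_def by (simp add: algebra_simps power2_eq_square)

theorem theorem2:
  fixes M :: "'w measure" and Z :: "nat \<Rightarrow> 'w \<Rightarrow> real"
    and \<sigma> a \<eta> :: real
  assumes "prob_space M"
    and "\<sigma> > 0" and "a > 1" and "\<eta> > 0"
    and "prob_space.indep_vars M (\<lambda>_. borel) Z {1..}"
    and "\<And>i. i \<ge> 1 \<Longrightarrow> distributed M lborel (Z i) (normal_density 0 \<sigma>)"
  shows "(liminf (\<lambda>n. ereal (- (1 / real n) * ln (measure M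
            {\<omega>\<in>space M. a_ML (\<lambda>i. AR_U a Z i \<omega>) n - a > \<eta>})))
           \<ge> ereal (ln (a + 2*\<eta>))) \<and>
         (liminf (\<lambda>n. ereal (- (1 / real n) * ln (measure M
            {\<omega>\<in>space M. a_ML (\<lambda>i. AR_U a Z i \<omega>) n - a < - \<eta>})))
           \<ge> ereal (I_minus a \<eta>)) \<and>
         (liminf (\<lambda>n. ereal (- (1 / real n) * ln (measure M
            {\<omega>\<in>space M. \<bar>a_ML (\<lambda>i. AR_U a Z i \<omega>) n - a\<bar> > \<eta>})))
           \<ge> ereal (I_minus a \<eta>))"
proof -
  note P = assms(1) and s = assms(2) and a = assms(3) and e = assms(4) and ind = assms(5) and dis = assms(6)
  interpret prob_space M by (rule P)
  have a0: "a > 0" using a by simp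
  have s2: "\<sigma>^2 \<noteq> 0" using s by simp
  have Zm: "\<And>i. i \<ge> 1 \<Longrightarrow> Z i \<in> borel_measurable M"
    using distributed_measurable[OF dis] by simp
  define f where "f n \<omega> = a_ML (\<lambda>i. AR_U a Z i \<omega>) n" for n \<omega>
  have fm: "\<And>n. f n \<in> borel_measurable M" unfolding f_def by (rule aML_meas[OF Zm])
  have fu: "f n \<omega> = a_ML (uu a (\<lambda>j. Z j \<omega>)) n" for n \<omega>
  proof -
    have "(\<lambda>i. AR_U a Z i \<omega>) = uu a (\<lambda>j. Z j \<omega>)" by (rule ext) (rule AR_uu)
    then show ?thesis unfolding f_def by simp
  qed
  define Ep where "Ep n = {\<omega>\<in>space M. a_ML (\<lambda>i. AR_U a Z i \<omega>) n - a > \<eta>}" for n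
  define Em where "Em n = {\<omega>\<in>space M. a_ML (\<lambda>i. AR_U a Z i \<omega>) n - a < - \<eta>}" for n
  define Ea where "Ea n = {\<omega>\<in>space M. \<bar>a_ML (\<lambda>i. AR_U a Z i \<omega>) n - a\<bar> > \<eta>}" for n
  have Eps: "Ep n \<in> sets M" for n
  proof -
    have "f n -` {x. \<eta> < x - a} \<inter> space M \<in> sets M" by (rule measurable_sets[OF fm]) simp
    moreover have "f n -` {x. \<eta> < x - a} \<inter> space M = Ep n" unfolding Ep_def f_def by auto
    ultimately show ?thesis by simp
  qed
  have Ems: "Em n \<in> sets M" for n
  proof -
    have "f n -` {x. x - a < - \<eta>} \<inter> space M \<in> sets M" by (rule measurable_sets[OF fm]) simp
    moreover have "f n -` {x. x - a < - \<eta>} \<inter> space M = Em n" unfolding Em_def f_def by auto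
    ultimately show ?thesis by simp
  qed
  have EaU: "Ea n = Ep n \<union> Em n" for n unfolding Ea_def Ep_def Em_def by auto
  have Eas: "Ea n \<in> sets M" for n unfolding EaU using Eps Ems by simp
  have pos_p: "eventually (\<lambda>n. measure M (Ep n) > 0) sequentially"
  proof (rule eventually_sequentiallyI[of 2])
    fix n :: nat assume n: "n \<ge> 2"
    show "measure M (Ep n) > 0"
    proof (rule prob_pos[OF P s a0 _ ind dis _ Eps])
      show "2*(a+\<eta>+1) \<noteq> 0" using a e by simp
      show "n \<ge> 1" using n by simp
      fix \<omega> assume "\<omega> \<in> space M" "Gp a (2*(a+\<eta>+1)) n (\<lambda>i. Z i \<omega>)"
      then show "\<omega> \<in> Ep n" using Gp_upper[OF a e _ n] fu unfolding Ep_def f_def by auto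
    qed
  qed
  have pos_m: "eventually (\<lambda>n. measure M (Em n) > 0) sequentially"
  proof (rule eventually_sequentiallyI[of 2])
    fix n :: nat assume n: "n \<ge> 2"
    show "measure M (Em n) > 0"
    proof (rule prob_pos[OF P s a0 _ ind dis _ Ems])
      have "0 < \<bar>a-\<eta>\<bar> + 1" by (rule add_nonneg_pos) simp_all
      then show "-2*(\<bar>a-\<eta>\<bar>+1) \<noteq> 0" by simp
      show "n \<ge> 1" using n by simp
      fix \<omega> assume "\<omega> \<in> space M" "Gp a (-2*(\<bar>a-\<eta>\<bar>+1)) n (\<lambda>i. Z i \<omega>)"
      then show "\<omega> \<in> Em n" using Gp_lower[OF a e _ n] fu unfolding Em_def f_def by auto
    qed
  qed
  have pos_a: "eventually (\<lambda>n. measure M (Ea n) > 0) sequentially"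
    using pos_p
  proof eventually_elim
    case (elim n)
    have "measure M (Ep n) \<le> measure M (Ea n)" using Eas by (intro finite_measure_mono) (auto simp: EaU)
    then show ?case using elim by simp
  qed
  have bnd_up: "\<exists>k. \<forall>n\<ge>k. measure M (Ep n) \<le> D powr (-(real n - real k)/2)"
    if D1: "1 < D" and t: "0 < t" "t < 2*\<eta>" and PD: "PP a t (t*\<eta>) D < 0" for D t
  proof -
    let ?s = "t/\<sigma>^2" and ?r = "t/\<sigma>^2*\<eta>"
    have S: "?s*\<sigma>^2 = t" "?r*\<sigma>^2 = t*\<eta>" using s2 by auto
    have sp: "?s > 0" using t s by simp
    show ?thesis
    proof (rule tail_bound[OF P s ind dis Eps, where a=a and s="?s" and r="?r"])
      fix n \<omega> assume "\<omega> \<in> Ep n"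
      then have "a_ML (uu a (\<lambda>j. Z j \<omega>)) n - a > \<eta>" using fu unfolding Ep_def f_def by auto
      then show "VV a ?s ?r (\<lambda>i. Z i \<omega>) n \<ge> 0" by (rule upper_pw[OF a e sp])
    next
      show "1 < D" by (rule D1)
      show "PP a (?s*\<sigma>^2) (?r*\<sigma>^2) 1 < 0" unfolding S PP1_up using t by (simp add: mult_pos_neg)
      show "PP a (?s*\<sigma>^2) (?r*\<sigma>^2) D < 0" unfolding S by (rule PD)
    qed
  qed
  have bnd_lo: "\<exists>k. \<forall>n\<ge>k. measure M (Em n) \<le> D powr (-(real n - real k)/2)"
    if D1: "1 < D" and t: "0 < t" "t < 2*\<eta>" and PD: "PP a (-t) (t*\<eta>) D < 0" for D t
  proof -
    let ?s = "-(t/\<sigma>^2)" and ?r = "t/\<sigma>^2*\<eta>"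
    have S: "?s*\<sigma>^2 = -t" "?r*\<sigma>^2 = t*\<eta>" using s2 by auto
    have sp: "t/\<sigma>^2 > 0" using t s by simp
    show ?thesis
    proof (rule tail_bound[OF P s ind dis Ems, where a=a and s="?s" and r="?r"])
      fix n \<omega> assume "\<omega> \<in> Em n"
      then have "a_ML (uu a (\<lambda>j. Z j \<omega>)) n - a < - \<eta>" using fu unfolding Em_def f_def by auto
      then show "VV a ?s ?r (\<lambda>i. Z i \<omega>) n \<ge> 0" by (rule lower_pw[OF a e sp])
    next
      show "1 < D" by (rule D1)
      show "PP a (?s*\<sigma>^2) (?r*\<sigma>^2) 1 < 0" unfolding S PP1_lo using t by (simp add: mult_pos_neg)
      show "PP a (?s*\<sigma>^2) (?r*\<sigma>^2) D < 0" unfolding S by (rule PD)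
    qed
  qed
  obtain ds where ds: "ds > 0" "I_minus a \<eta> = ln ds / 2"
    and dsT: "\<And>D. 1 < D \<Longrightarrow> D < ds \<Longrightarrow> \<exists>t. 0 < t \<and> t < 2*\<eta> \<and> PP a (-t) (t*\<eta>) D < 0"
    using Iminus_char[OF a e] by blast
  have c1: "liminf (\<lambda>n. ereal (- (1 / real n) * ln (measure M (Ep n)))) \<ge> ereal (ln (a + 2*\<eta>))"
  proof (rule liminf_rate[where p="\<lambda>n. measure M (Ep n)" and ds="(a + 2*\<eta>)^2"])
    show "\<And>n. 0 \<le> measure M (Ep n) \<and> measure M (Ep n) \<le> 1" by (simp add: prob_le_1)
    show "eventually (\<lambda>n. measure M (Ep n) > 0) sequentially" by (rule pos_p)
    show "(a + 2*\<eta>)^2 > 0" using a e by simp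
    show "ln (a + 2*\<eta>) = ln ((a + 2*\<eta>)^2) / 2" using a e by (simp add: ln_realpow)
    fix D assume "1 < D" "D < (a + 2*\<eta>)^2"
    then obtain t where t: "0 < t" "t < 2*\<eta>" "PP a t (t*\<eta>) D < 0" using upper_t[OF a e] by blast
    obtain k where "\<forall>n\<ge>k. measure M (Ep n) \<le> D powr (-(real n - real k)/2)" using bnd_up[OF \<open>1 < D\<close> t] by blast
    then show "\<exists>k C. C > 0 \<and> eventually (\<lambda>n. measure M (Ep n) \<le> C * D powr (-(real n - real k)/2)) sequentially"
      by (intro exI[of _ k] exI[of _ 1]) (auto simp: eventually_sequentially)
  qed
  have c2: "liminf (\<lambda>n. ereal (- (1 / real n) * ln (measure M (Em n)))) \<ge> ereal (I_minus a \<eta>)"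
  proof (rule liminf_rate[where p="\<lambda>n. measure M (Em n)" and ds=ds])
    show "\<And>n. 0 \<le> measure M (Em n) \<and> measure M (Em n) \<le> 1" by (simp add: prob_le_1)
    show "eventually (\<lambda>n. measure M (Em n) > 0) sequentially" by (rule pos_m)
    show "ds > 0" "I_minus a \<eta> = ln ds / 2" by (rule ds(1), rule ds(2))
    fix D assume "1 < D" "D < ds"
    then obtain t where t: "0 < t" "t < 2*\<eta>" "PP a (-t) (t*\<eta>) D < 0" using dsT by blast
    obtain k where "\<forall>n\<ge>k. measure M (Em n) \<le> D powr (-(real n - real k)/2)" using bnd_lo[OF \<open>1 < D\<close> t] by blast
    then show "\<exists>k C. C > 0 \<and> eventually (\<lambda>n. measure M (Em n) \<le> C * D powr (-(real n - real k)/2)) sequentially"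
      by (intro exI[of _ k] exI[of _ 1]) (auto simp: eventually_sequentially)
  qed
  have c3: "liminf (\<lambda>n. ereal (- (1 / real n) * ln (measure M (Ea n)))) \<ge> ereal (I_minus a \<eta>)"
  proof (rule liminf_rate[where p="\<lambda>n. measure M (Ea n)" and ds=ds])
    show "\<And>n. 0 \<le> measure M (Ea n) \<and> measure M (Ea n) \<le> 1" by (simp add: prob_le_1)
    show "eventually (\<lambda>n. measure M (Ea n) > 0) sequentially" by (rule pos_a)
    show "ds > 0" "I_minus a \<eta> = ln ds / 2" by (rule ds(1), rule ds(2))
    fix D assume D1: "1 < D" "D < ds"
    then obtain t where t: "0 < t" "t < 2*\<eta>" "PP a (-t) (t*\<eta>) D < 0" using dsT by blast
    have "PP a t (t*\<eta>) D < 0"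
    proof -
      have "4*a*t*(1 - D) < 0" using a0 t D1 by (simp add: mult_pos_neg)
      then show ?thesis using PP_up_lo[of a t \<eta> D] t(3) by linarith
    qed
    then obtain k1 where k1: "\<forall>n\<ge>k1. measure M (Ep n) \<le> D powr (-(real n - real k1)/2)"
      using bnd_up[OF D1(1) t(1,2)] by blast
    obtain k2 where k2: "\<forall>n\<ge>k2. measure M (Em n) \<le> D powr (-(real n - real k2)/2)"
      using bnd_lo[OF D1(1) t] by blast
    let ?k = "max k1 k2"
    have hk: "measure M (Ea n) \<le> 2 * D powr (-(real n - real ?k)/2)" if n: "n \<ge> ?k" for n
    proof -
      have "measure M (Ea n) \<le> measure M (Ep n) + measure M (Em n)"
        unfolding EaU using Eps Ems by (rule measure_Un_le)
      also have "\<dots> \<le> D powr (-(real n - real k1)/2) + D powr (-(real n - real k2)/2)"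
        using k1 k2 n by (intro add_mono) auto
      also have "\<dots> \<le> D powr (-(real n - real ?k)/2) + D powr (-(real n - real ?k)/2)"
        using D1 by (intro add_mono powr_mono) auto
      finally show ?thesis by simp
    qed
    have "eventually (\<lambda>n. measure M (Ea n) \<le> 2 * D powr (-(real n - real ?k)/2)) sequentially"
      using hk by (rule eventually_sequentiallyI)
    then show "\<exists>k C. C > 0 \<and> eventually (\<lambda>n. measure M (Ea n) \<le> C * D powr (-(real n - real k)/2)) sequentially"
      by (intro exI[of _ ?k] exI[of _ 2]) simp
  qed
  show ?thesis using c1 c2 c3 unfolding Ep_def Em_def Ea_def by simp
qed

end
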